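(* Let $\alpha$ be a parameter and $M_1=(n_1',\dots,n_{r_4}'\,|\,n_1,\dots,n_{r_1})$, $M_2=(m_1',\dots,m_{r_3}'\,|\,m_1,\dots,m_{r_2})$ Maya diagrams. Then, up to a factor $\pm1$: (a) If $n_{r_1}=0$, then $\Omega_{M_1,M_2}[\widetilde h^{\alpha}(x,\lambda)]=\left((-\alpha)\prod_{i=1}^{r_3}(m_i'-\alpha)\prod_{i=1}^{r_4}(n_i'+1)\right)\Omega_{M_1-1,M_2}[\widetilde h^{\alpha+1}(x,\lambda-1)]$. (b) If $n_{r_4}'=0$, then $\Omega_{M_1,M_2}[\widetilde h^{\alpha}(x,\lambda)]=\left(\frac{\lambda+1}{1-\alpha}\prod_{i=1}^{r_1}(n_i+1)\prod_{i=1}^{r_2}(m_i+\alpha)\right)\Omega_{M_1+1,M_2}[\widetilde h^{\alpha-1}(x,\lambda+1)]$. (c) If $m_{r_2}=0$, then $\Omega_{M_1,M_2}[\widetilde h^{\alpha}(x,\lambda)]=\left((-\alpha)\prod_{i=1}^{r_3}(m_i'+1)\prod_{i=1}^{r_4}(n_i'-\alpha)\right)\Omega_{M_1,M_2-1}[\widetilde h^{\alpha+1}(x,\lambda)]$. (d) If $m_{r_3}'=0$, then $\Omega_{M_1,M_2}[\widetilde h^{\alpha}(x,\lambda)]=\left(\frac{-\lambda-\alpha}{1-\alpha}\prod_{i=1}^{r_1}(n_i+\alpha)\prod_{i=1}^{r_2}(m_i+1)\right)\Omega_{M_1,M_2+1}[\widetilde h^{\alpha-1}(x,\lambda)]$.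
   Context: $L_n^{\beta}$ is the classical Laguerre polynomial; $M(a,b,x)={}_1F_1(a;b;x)$; $\widetilde h^{\beta}(x,\lambda)=x^{-\beta}M(-\lambda-\beta,1-\beta,x)$. A Maya diagram is a set $M\subset\mathbb{Z}$ containing finitely many nonnegative integers and all but finitely many negative integers; it is encoded as $M=(n_1',\dots,n_{r_4}'\,|\,n_1,\dots,n_{r_1})$ where $n_1>\dots>n_{r_1}\ge0$ are the nonnegative elements of $M$ and $n_1'>\dots>n_{r_4}'\ge0$ are such that $-n_j'-1$ are exactly the negative integers not in $M$. For $t\in\mathbb{Z}$, $M+t=\{k+t:k\in M\}$. For Maya diagrams $M_1=(n'|n)$, $M_2=(m'|m)$ and a parameter $\beta$, set $r=r_1+r_2+r_3+r_4$, seed functions $f_j=L^{\beta}_{n_j}(x)$ ($1\le j\le r_1$), $f_{r_1+j}=e^xL^{\beta}_{m_j}(-x)$ ($1\le j\le r_2$), $f_{r_1+r_2+j}=x^{-\beta}L^{-\beta}_{m_j'}(x)$ ($1\le j\le r_3$), $f_{r_1+r_2+r_3+j}=e^xx^{-\beta}L^{-\beta}_{n_j'}(-x)$ ($1\le j\le r_4$), and $$\Omega_{M_1,M_2}[\widetilde h^{\beta}(x,\lambda)]=e^{-(r_2+r_4)x}x^{(\beta+r_1+r_2)(r_3+r_4+1)}\,\mathrm{Wr}\left[f_1,\dots,f_r,\widetilde h^{\beta}(\cdot,\lambda)\right](x).$$ On the right-hand sides the same construction is used with the shifted Maya diagrams (re-encoded) and the indicated parameter. The paper ignores overall factors $(-1)^d$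 throughout. *)

theory Defs
  imports "HOL-Analysis.Analysis"
begin

definition maya :: "int set \<Rightarrow> bool" where
  "maya M \<longleftrightarrow> finite {k \<in> M. k \<ge> 0} \<and> finite {k. k < 0 \<and> k \<notin> M}"

text \<open>Encoding M = (n'_1,...,n'_r4 | n_1,...,n_r1): both lists strictly decreasing.\<close>
definition maya_pos :: "int set \<Rightarrow> nat list" where
  "maya_pos M = rev (sorted_list_of_set {n::nat. int n \<in> M})"

definition maya_neg :: "int set \<Rightarrow> nat list" where
  "maya_neg M = rev (sorted_list_of_set {n::nat. - int n - 1 \<notin> M})"

definition maya_shift :: "int set \<Rightarrow> int \<Rightarrow> int set" where
  "maya_shift M t = (\<lambda>k. k + t) ` M"

definition laguerre :: "nat \<Rightarrow> real \<Rightarrow> real \<Rightarrow> real" where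
  "laguerre n b x = (\<Sum>k\<le>n. (-1)^k * (pochhammer (b + real k + 1) (n - k) / fact (n - k))
                              * x ^ k / fact k)"

definition kummerM :: "real \<Rightarrow> real \<Rightarrow> real \<Rightarrow> real" where
  "kummerM a b x = (\<Sum>k. pochhammer a k / pochhammer b k * x ^ k / fact k)"

definition htilde :: "real \<Rightarrow> real \<Rightarrow> real \<Rightarrow> real" where
  "htilde b lam x = x powr (- b) * kummerM (- lam - b) (1 - b) x"

definition wronskian :: "(real \<Rightarrow> real) list \<Rightarrow> real \<Rightarrow> real" where
  "wronskian fs x = (\<Sum>p | p permutes {..<length fs}.
      of_int (sign p) * (\<Prod>i<length fs. (deriv ^^ i) (fs ! (p i)) x))"

definition seed_functions :: "int set \<Rightarrow> int set \<Rightarrow> real \<Rightarrow> (real \<Rightarrow> real) list" where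
  "seed_functions M1 M2 b =
     map (\<lambda>n x. laguerre n b x) (maya_pos M1)
   @ map (\<lambda>m x. exp x * laguerre m b (- x)) (maya_pos M2)
   @ map (\<lambda>m' x. x powr (- b) * laguerre m' (- b) x) (maya_neg M2)
   @ map (\<lambda>n' x. exp x * x powr (- b) * laguerre n' (- b) (- x)) (maya_neg M1)"

definition Omega :: "int set \<Rightarrow> int set \<Rightarrow> real \<Rightarrow> (real \<Rightarrow> real) \<Rightarrow> real \<Rightarrow> real" where
  "Omega M1 M2 b g x =
     (let r1 = length (maya_pos M1); r2 = length (maya_pos M2);
          r3 = length (maya_neg M2); r4 = length (maya_neg M1)
      in exp (- real (r2 + r4) * x) * x powr ((b + real r1 + real r2) * real (r3 + r4 + 1))
         * wronskian (seed_functions M1 M2 b @ [g]) x)"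

end

theory Submission
  imports Defs "Jordan_Normal_Form.Determinant" "HOL-Real_Asymp.Real_Asymp"
begin


definition sm :: "(real \<Rightarrow> real) \<Rightarrow> bool" where
  "sm f \<longleftrightarrow> (\<forall>i x. 0 < x \<longrightarrow> (deriv ^^ i) f differentiable (at x))"

lemma ev_pos: "0 < (x::real) \<Longrightarrow> eventually (\<lambda>y. 0 < y) (nhds x)"
  using eventually_nhds_in_open[of "{0<..}" x] by auto

lemma funpow_deriv_Suc: "(deriv ^^ Suc i) f = (deriv ^^ i) (deriv f)"
  by (simp add: funpow_Suc_right del: funpow.simps)

lemma loc_deriv:
  fixes f g :: "real \<Rightarrow> real" and x :: real
  assumes "\<And>y. 0 < y \<Longrightarrow> f y = g y" "0 < x"
  shows "(deriv ^^ i) f x = (deriv ^^ i) g x"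
  using assms(2)
proof (induction i arbitrary: x)
  case 0 then show ?case using assms by simp
next
  case (Suc i)
  have "eventually (\<lambda>y. (deriv ^^ i) f y = (deriv ^^ i) g y) (nhds x)"
    using ev_pos[OF Suc.prems] by (rule eventually_mono) (use Suc.IH in auto)
  then show ?case by (simp add: deriv_cong_ev)
qed

lemma sm_cong:
  fixes f g :: "real \<Rightarrow> real"
  assumes "\<And>y. 0 < y \<Longrightarrow> f y = g y" "sm f" shows "sm g"
  unfolding sm_def
proof (intro allI impI)
  fix i and x :: real assume x: "0 < x"
  have "(deriv ^^ i) f differentiable (at x)" using assms(2) x by (auto simp: sm_def)
  then obtain D where D: "((deriv ^^ i) f has_real_derivative D) (at x)"
    using real_differentiable_def by blast
  have "((deriv ^^ i) g has_real_derivative D) (at x)"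
    by (rule has_field_derivative_transform_within_open[OF D, of "{0<..}"])
       (use x loc_deriv[OF assms(1)] in auto)
  then show "(deriv ^^ i) g differentiable (at x)" using real_differentiable_def by blast
qed

lemma sm_D: "sm f \<Longrightarrow> 0 < x \<Longrightarrow> ((deriv ^^ i) f has_real_derivative (deriv ^^ Suc i) f x) (at x)"
  unfolding sm_def by (simp add: DERIV_deriv_iff_real_differentiable)

lemma sm_deriv: "sm f \<Longrightarrow> sm (deriv f)"
  unfolding sm_def by (metis funpow_deriv_Suc)

lemma sm_family:
  assumes step: "\<And>f. P f \<Longrightarrow> \<exists>f'. P f' \<and> (\<forall>x>0. (f has_real_derivative f' x) (at x))"
    and P: "P f"
  shows "sm f"
proof -
  have key: "\<forall>f. P f \<longrightarrow> (\<exists>g. P g \<and> (\<forall>x>0. (deriv ^^ i) f x = g x))" for i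
  proof (induction i)
    case 0 then show ?case by auto
  next
    case (Suc i)
    show ?case
    proof (intro allI impI)
      fix f assume "P f"
      then obtain g where g: "P g" "\<forall>x>0. (deriv ^^ i) f x = g x" using Suc.IH by blast
      obtain g' where g': "P g'" "\<forall>x>0. (g has_real_derivative g' x) (at x)" using step[OF g(1)] by blast
      have "(deriv ^^ Suc i) f x = g' x" if x: "0 < x" for x
      proof -
        have "(deriv ^^ Suc i) f x = deriv ((deriv ^^ i) f) x" by simp
        also have "\<dots> = deriv g x"
          by (rule deriv_cong_ev[OF eventually_mono[OF ev_pos[OF x]]]) (use g in auto)
        also have "\<dots> = g' x" using g' x by (simp add: DERIV_imp_deriv)
        finally show ?thesis .
      qed
      then show "\<exists>g. P g \<and> (\<forall>x>0. (deriv ^^ Suc i) f x = g x)" using g' by blast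
    qed
  qed
  show ?thesis unfolding sm_def
  proof (intro allI impI)
    fix i and x :: real assume x: "0 < x"
    obtain g where g: "P g" "\<forall>x>0. (deriv ^^ i) f x = g x" using key P by blast
    obtain g' where g': "P g'" "\<forall>x>0. (g has_real_derivative g' x) (at x)" using step[OF g(1)] by blast
    have "((deriv ^^ i) f has_real_derivative g' x) (at x)"
      by (rule has_field_derivative_transform_within_open[of g _ _ "{0<..}"]) (use g g' x in auto)
    then show "(deriv ^^ i) f differentiable (at x)" using real_differentiable_def by blast
  qed
qed

lemma Suc_choose': "Suc n choose k = (n choose k) + (if k = 0 then 0 else (n choose (k-1)))"
  by (cases k) simp_all

lemma leibniz:
  assumes f: "sm f" and g: "sm g" and x: "0 < x"
  shows "(deriv ^^ n) (\<lambda>w. f w * g w) x =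
           (\<Sum>i = 0..n. of_nat (n choose i) * (deriv ^^ i) f x * (deriv ^^ (n-i)) g x)"
using x
proof (induction n arbitrary: x)
  case 0 then show ?case by simp
next
  case (Suc n z)
  have *: "\<And>n. ((deriv ^^ n) f has_field_derivative deriv ((deriv ^^ n) f) z) (at z)"
          "\<And>n. ((deriv ^^ n) g has_field_derivative deriv ((deriv ^^ n) g) z) (at z)"
    using sm_D[OF f Suc.prems] sm_D[OF g Suc.prems] by auto
  have sumeq: "(\<Sum>i = 0..n.
               of_nat (n choose i) * (deriv ((deriv ^^ i) f) z * (deriv ^^ (n-i)) g z + deriv ((deriv ^^ (n-i)) g) z * (deriv ^^ i) f z)) =
            g z * deriv ((deriv ^^ n) f) z + (\<Sum>i = 0..n. (deriv ^^ i) f z * (of_nat (Suc n choose i) * (deriv ^^ (Suc n - i)) g z))"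
    apply (simp add: Suc_choose' algebra_simps sum.distrib)
    apply (subst (4) sum_Suc_reindex)
    apply (auto simp: algebra_simps Suc_diff_le intro: sum.cong)
    done
  have "((deriv ^^ n) (\<lambda>w. f w * g w) has_field_derivative
         (\<Sum>i = 0..Suc n. (Suc n choose i) * (deriv ^^ i) f z * (deriv ^^ (Suc n - i)) g z))
        (at z)"
    apply (rule has_field_derivative_transform_within_open
        [of "\<lambda>w. (\<Sum>i = 0..n. of_nat (n choose i) * (deriv ^^ i) f w * (deriv ^^ (n-i)) g w)" _ _ "{0<..}"])
       apply (simp add: algebra_simps)
       apply (rule derivative_eq_intros | simp)+
           apply (auto intro: DERIV_mult * Suc.prems Suc.IH [symmetric])
    by (metis (no_types, lifting) mult.commute sum.cong sumeq)
  then show ?case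
    unfolding funpow.simps o_apply
    by (simp add: DERIV_imp_deriv)
qed

lemma sm_mult:
  assumes f: "sm f" and g: "sm g" shows "sm (\<lambda>w. f w * g w)"
  unfolding sm_def
proof (intro allI impI)
  fix n and x :: real assume x: "0 < x"
  have "((\<lambda>w. \<Sum>i = 0..n. of_nat (n choose i) * (deriv ^^ i) f w * (deriv ^^ (n-i)) g w) has_real_derivative
     (\<Sum>i = 0..n. of_nat (n choose i) * ((deriv ^^ Suc i) f x * (deriv ^^ (n-i)) g x + (deriv ^^ i) f x * (deriv ^^ Suc (n-i)) g x))) (at x)"
    by (rule derivative_eq_intros sm_D[OF f x] sm_D[OF g x] | simp add: algebra_simps)+
  then have "((deriv ^^ n) (\<lambda>w. f w * g w) has_real_derivative
     (\<Sum>i = 0..n. of_nat (n choose i) * ((deriv ^^ Suc i) f x * (deriv ^^ (n-i)) g x + (deriv ^^ i) f x * (deriv ^^ Suc (n-i)) g x))) (at x)"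
    by (rule has_field_derivative_transform_within_open[of _ _ _ "{0<..}"]) (use x leibniz[OF f g] in auto)
  then show "(deriv ^^ n) (\<lambda>w. f w * g w) differentiable (at x)" using real_differentiable_def by blast
qed

lemma sm_cmult_deriv:
  fixes x :: real
  assumes g: "sm g" and x: "0 < x"
  shows "(deriv ^^ i) (\<lambda>y. c * g y) x = c * (deriv ^^ i) g x"
  using x
proof (induction i arbitrary: x)
  case 0 then show ?case by simp
next
  case (Suc i)
  have "(deriv ^^ Suc i) (\<lambda>y. c * g y) x = deriv ((deriv ^^ i) (\<lambda>y. c * g y)) x" by simp
  also have "\<dots> = deriv (\<lambda>y. c * (deriv ^^ i) g y) x"
    by (rule deriv_cong_ev[OF eventually_mono[OF ev_pos[OF Suc.prems]]]) (use Suc.IH in auto)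
  also have "\<dots> = c * (deriv ^^ Suc i) g x"
    using sm_D[OF g Suc.prems, of i] by (intro DERIV_imp_deriv) (auto intro!: derivative_eq_intros)
  finally show ?case .
qed


definition WM :: "(real \<Rightarrow> real) list \<Rightarrow> real \<Rightarrow> real mat" where
  "WM fs x = Matrix.mat (length fs) (length fs) (\<lambda>(i,j). (deriv ^^ i) (fs ! j) x)"

lemma WM_carrier: "WM fs x \<in> carrier_mat (length fs) (length fs)"
  unfolding WM_def by auto

lemma wronskian_det: "wronskian fs x = Determinant.det (WM fs x)"
proof -
  have "Determinant.det (WM fs x) = (\<Sum>p\<in>{p. p permutes {0..<length fs}}.
      signof p * (\<Prod>i = 0..<length fs. WM fs x $$ (i, p i)))"
    by (rule det_def'[OF WM_carrier])
  also have "\<dots> = wronskian fs x"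
    unfolding wronskian_def atLeast0LessThan
  proof (rule sum.cong[OF refl])
    fix p assume "p \<in> {p. p permutes {..<length fs}}"
    then have p: "p permutes {..<length fs}" by simp
    have "WM fs x $$ (i, p i) = (deriv ^^ i) (fs ! p i) x" if "i < length fs" for i
      using that permutes_in_image[OF p, of i] by (simp add: WM_def)
    then show "signof p * (\<Prod>i<length fs. WM fs x $$ (i, p i)) =
      of_int (sign p) * (\<Prod>i<length fs. (deriv ^^ i) (fs ! p i) x)" by simp
  qed
  finally show ?thesis by simp
qed

lemma W_cong:
  assumes "length fs = length gs" "\<And>j y. j < length fs \<Longrightarrow> 0 < y \<Longrightarrow> (fs ! j) y = (gs ! j) y" "0 < x"
  shows "wronskian fs x = wronskian gs x"
  unfolding wronskian_def assms(1)[symmetric]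
proof (rule sum.cong[OF refl])
  fix p assume "p \<in> {p. p permutes {..<length fs}}"
  then have p: "p permutes {..<length fs}" by simp
  have "(deriv ^^ i) (fs ! p i) x = (deriv ^^ i) (gs ! p i) x" if "i < length fs" for i
    using permutes_in_image[OF p, of i] that assms(2,3) by (intro loc_deriv) auto
  then show "of_int (sign p) * (\<Prod>i<length fs. (deriv ^^ i) (fs ! p i) x) =
      of_int (sign p) * (\<Prod>i<length fs. (deriv ^^ i) (gs ! p i) x)" by simp
qed

lemma W_common:
  assumes phi: "sm \<phi>" and gs: "\<And>g. g \<in> set gs \<Longrightarrow> sm g" and x: "0 < x"
  shows "wronskian (map (\<lambda>g y. \<phi> y * g y) gs) x = \<phi> x ^ length gs * wronskian gs x"
proof -
  define n where "n = length gs"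
  define L where "L = Matrix.mat n n (\<lambda>(i,k). if k \<le> i then of_nat (i choose k) * (deriv ^^ (i-k)) \<phi> x else 0)"
  have L: "L \<in> carrier_mat n n" unfolding L_def by auto
  have G: "WM gs x \<in> carrier_mat n n" using WM_carrier n_def by auto
  have eq: "WM (map (\<lambda>g y. \<phi> y * g y) gs) x = L * WM gs x"
  proof (rule eq_matI)
    fix i j assume i: "i < dim_row (L * WM gs x)" and j: "j < dim_col (L * WM gs x)"
    then have i: "i < n" and j: "j < n" using L G by auto
    have gj: "sm (gs ! j)" using gs j n_def by auto
    have "(L * WM gs x) $$ (i, j) = (\<Sum>k\<in>{0..<n}. (if k \<le> i then of_nat (i choose k) * (deriv ^^ (i-k)) \<phi> x else 0) * (deriv ^^ k) (gs ! j) x)"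
      using i j L G unfolding L_def WM_def n_def[symmetric] by (simp add: scalar_prod_def)
    also have "\<dots> = (\<Sum>k\<in>{0..i}. of_nat (i choose k) * (deriv ^^ (i-k)) \<phi> x * (deriv ^^ k) (gs ! j) x)"
      by (rule sum.mono_neutral_cong_right) (use i in auto)
    also have "\<dots> = (deriv ^^ i) (\<lambda>w. (gs ! j) w * \<phi> w) x"
      by (subst leibniz[OF gj phi x]) (auto simp: algebra_simps)
    also have "\<dots> = WM (map (\<lambda>g y. \<phi> y * g y) gs) x $$ (i, j)"
      using i j unfolding WM_def n_def by (simp add: mult.commute)
    finally show "WM (map (\<lambda>g y. \<phi> y * g y) gs) x $$ (i, j) = (L * WM gs x) $$ (i, j)" by simp
  qed (use L G n_def in \<open>auto simp: WM_def\<close>)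
  have dL: "Determinant.det L = \<phi> x ^ n"
    by (subst det_lower_triangular[OF _ L]) (auto simp: L_def prod_list_diag_prod)
  show ?thesis
    unfolding wronskian_det eq det_mult[OF L G] dL n_def ..
qed

lemma higher_deriv_const0: "(deriv ^^ i) (\<lambda>_. 0::real) = (\<lambda>_. 0)"
  by (induction i) (auto simp: deriv_const)

lemma W_const_col:
  assumes k: "k < length fs" and one: "\<And>y. 0 < y \<Longrightarrow> (fs ! k) y = 1" and x: "0 < x"
  shows "wronskian fs x = (-1) ^ k * wronskian (map deriv (take k fs @ drop (Suc k) fs)) x"
proof -
  define n where "n = length fs"
  define A where "A = WM fs x"
  have A: "A \<in> carrier_mat n n" using WM_carrier A_def n_def by auto
  have col: "A $$ (i, k) = (if i = 0 then 1 else 0)" if "i < n" for i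
  proof -
    have "A $$ (i, k) = (deriv ^^ i) (fs ! k) x" using that k unfolding A_def WM_def n_def by simp
    also have "\<dots> = (deriv ^^ i) (\<lambda>_. 1) x" by (rule loc_deriv) (use one x in auto)
    also have "\<dots> = (if i = 0 then 1 else 0)"
      by (cases i) (auto simp: funpow_deriv_Suc deriv_const higher_deriv_const0 simp del: funpow.simps)
    finally show ?thesis .
  qed
  have "Determinant.det A = (\<Sum>i<n. A $$ (i, k) * cofactor A i k)"
    by (rule laplace_expansion_column[OF A]) (use k n_def in auto)
  also have "\<dots> = (\<Sum>i\<in>{0}. A $$ (i, k) * cofactor A i k)"
    by (rule sum.mono_neutral_right) (use col k n_def in auto)
  also have "\<dots> = cofactor A 0 k"
  proof -
    have "0 < n" using k n_def by (cases fs) auto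
    then have "A $$ (0, k) = 1" using col[of 0] by simp
    then show ?thesis by simp
  qed
  also have "\<dots> = (-1) ^ k * Determinant.det (mat_delete A 0 k)" unfolding cofactor_def by simp
  also have "mat_delete A 0 k = WM (map deriv (take k fs @ drop (Suc k) fs)) x"
  proof (rule eq_matI)
    fix i j assume "i < dim_row (WM (map deriv (take k fs @ drop (Suc k) fs)) x)"
        "j < dim_col (WM (map deriv (take k fs @ drop (Suc k) fs)) x)"
    then have i: "i < n - 1" and j: "j < n - 1" using k n_def by (auto simp: WM_def)
    have "mat_delete A 0 k $$ (i, j) = A $$ (Suc i, if j < k then j else Suc j)"
      using i j A unfolding mat_delete_def by auto
    also have "\<dots> = (deriv ^^ Suc i) (fs ! (if j < k then j else Suc j)) x"
      using i j k unfolding A_def WM_def n_def by auto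
    also have "\<dots> = (deriv ^^ i) (deriv (fs ! (if j < k then j else Suc j))) x"
      by (simp only: funpow_deriv_Suc)
    also have "fs ! (if j < k then j else Suc j) = (take k fs @ drop (Suc k) fs) ! j"
      using j k n_def by (auto simp: nth_append min_def)
    also have "(deriv ^^ i) (deriv ((take k fs @ drop (Suc k) fs) ! j)) x
       = WM (map deriv (take k fs @ drop (Suc k) fs)) x $$ (i, j)"
      using i j k n_def unfolding WM_def by (simp del: map_append add: min_def)
    finally show "mat_delete A 0 k $$ (i, j) = WM (map deriv (take k fs @ drop (Suc k) fs)) x $$ (i, j)" .
  qed (use A k n_def in \<open>auto simp: WM_def min_def\<close>)
  finally show ?thesis unfolding wronskian_det A_def .
qed

lemma W_cscale:
  assumes "\<And>c g. (c, g) \<in> set cgs \<Longrightarrow> sm g" and x: "0 < x"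
  shows "wronskian (map (\<lambda>(c, g) y. c * g y) cgs) x = prod_list (map fst cgs) * wronskian (map snd cgs) x"
proof -
  define n where "n = length cgs"
  have sg: "sm (snd (cgs ! j))" if "j < n" for j
    using assms(1)[of "fst (cgs ! j)" "snd (cgs ! j)"] that n_def by (metis nth_mem prod.collapse)
  have pl: "prod_list (map fst cgs) = (\<Prod>i<n. fst (cgs ! i))"
    by (simp add: prod.list_conv_set_nth n_def atLeast0LessThan)
  have "wronskian (map (\<lambda>(c, g) y. c * g y) cgs) x =
     (\<Sum>p | p permutes {..<n}. of_int (sign p) * (\<Prod>i<n. fst (cgs ! p i) * (deriv ^^ i) (snd (cgs ! p i)) x))"
    unfolding wronskian_def length_map n_def[symmetric]
  proof (rule sum.cong, simp, rule arg_cong2[where f="(*)"], simp, rule prod.cong, simp)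
    fix p i assume "p \<in> {p. p permutes {..<n}}" "i \<in> {..<n}"
    then have p: "p permutes {..<n}" and i: "i < n" by (auto simp: n_def)
    have pi: "p i < n" using permutes_in_image[OF p] i by auto
    have "(map (\<lambda>(c, g) y. c * g y) cgs ! p i) = (\<lambda>y. fst (cgs ! p i) * snd (cgs ! p i) y)"
      using pi n_def by (auto simp: case_prod_beta)
    then show "(deriv ^^ i) (map (\<lambda>(c, g) y. c * g y) cgs ! p i) x = fst (cgs ! p i) * (deriv ^^ i) (snd (cgs ! p i)) x"
      using sm_cmult_deriv[OF sg[OF pi] x] by simp
  qed
  also have "\<dots> = (\<Sum>p | p permutes {..<n}. (\<Prod>i<n. fst (cgs ! i)) * (of_int (sign p) * (\<Prod>i<n. (deriv ^^ i) (snd (cgs ! p i)) x)))"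
  proof (rule sum.cong[OF refl])
    fix p assume "p \<in> {p. p permutes {..<n}}"
    then have p: "p permutes {..<n}" by simp
    have "(\<Prod>i<n. fst (cgs ! p i)) = (\<Prod>i<n. fst (cgs ! i))"
      using prod.permute[OF p, of "\<lambda>i. fst (cgs ! i)"] by (simp add: comp_def)
    then show "of_int (sign p) * (\<Prod>i<n. fst (cgs ! p i) * (deriv ^^ i) (snd (cgs ! p i)) x) =
      (\<Prod>i<n. fst (cgs ! i)) * (of_int (sign p) * (\<Prod>i<n. (deriv ^^ i) (snd (cgs ! p i)) x))"
      by (simp add: prod.distrib)
  qed
  also have "\<dots> = prod_list (map fst cgs) * wronskian (map snd cgs) x"
    unfolding pl wronskian_def length_map n_def[symmetric] sum_distrib_left
  proof (rule sum.cong[OF refl])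
    fix p assume "p \<in> {p. p permutes {..<n}}"
    then have p: "p permutes {..<n}" by simp
    have "(\<Prod>i<n. (deriv ^^ i) (snd (cgs ! p i)) x) = (\<Prod>i<n. (deriv ^^ i) (map snd cgs ! p i) x)"
      by (rule prod.cong[OF refl]) (use permutes_in_image[OF p] n_def in auto)
    then show "(\<Prod>i<n. fst (cgs ! i)) * (of_int (sign p) * (\<Prod>i<n. (deriv ^^ i) (snd (cgs ! p i)) x)) =
       (\<Prod>i<n. fst (cgs ! i)) * (of_int (sign p) * (\<Prod>i<n. (deriv ^^ i) (map snd cgs ! p i) x))" by simp
  qed
  finally show ?thesis .
qed

lemma W_deriv_scale:
  assumes rel: "list_all2 (\<lambda>f cg. sm (snd cg) \<and> (\<forall>y>0. deriv f y = fst cg * snd cg y)) fs cgs" and x: "0 < x"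
  shows "wronskian (map deriv fs) x = prod_list (map fst cgs) * wronskian (map snd cgs) x"
proof -
  have len: "length fs = length cgs" using rel list_all2_lengthD by blast
  have "wronskian (map deriv fs) x = wronskian (map (\<lambda>(c, g) y. c * g y) cgs) x"
    by (rule W_cong) (use len rel x in \<open>auto simp: list_all2_conv_all_nth case_prod_beta\<close>)
  also have "\<dots> = prod_list (map fst cgs) * wronskian (map snd cgs) x"
  proof (rule W_cscale[OF _ x])
    fix c g assume "(c, g) \<in> set cgs"
    then obtain j where j: "j < length cgs" "cgs ! j = (c, g)" by (auto simp: in_set_conv_nth)
    then show "sm g" using rel unfolding list_all2_conv_all_nth by (metis snd_conv)
  qed
  finally show ?thesis .
qed


lemma RED:
  assumes phi: "sm \<phi>" and psi: "sm \<psi>" and x: "0 < x"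
    and rel1: "list_all2 (\<lambda>f q. sm q \<and> (\<forall>y>0. f y = \<phi> y * q y)) fs qs"
    and k: "k < length qs" and one: "\<forall>y>0. (qs ! k) y = 1"
    and rel2: "list_all2 (\<lambda>q cg. sm (snd cg) \<and> (\<forall>y>0. deriv q y = fst cg * (\<psi> y * snd cg y)))
                 (take k qs @ drop (Suc k) qs) cgs"
  shows "wronskian fs x = (-1) ^ k * \<phi> x ^ length fs * \<psi> x ^ (length fs - 1)
            * prod_list (map fst cgs) * wronskian (map snd cgs) x"
proof -
  have len: "length fs = length qs" using rel1 list_all2_lengthD by blast
  have len2: "length cgs = length fs - 1" using rel2 k len list_all2_lengthD by fastforce
  have smq: "sm q" if "q \<in> set qs" for q
    using that rel1 unfolding list_all2_conv_all_nth in_set_conv_nth by metis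
  have "wronskian fs x = wronskian (map (\<lambda>q y. \<phi> y * q y) qs) x"
    by (rule W_cong) (use len rel1 x in \<open>auto simp: list_all2_conv_all_nth\<close>)
  also have "\<dots> = \<phi> x ^ length qs * wronskian qs x"
    by (rule W_common[OF phi smq x])
  also have "wronskian qs x = (-1) ^ k * wronskian (map deriv (take k qs @ drop (Suc k) qs)) x"
    by (rule W_const_col[OF k]) (use one x in auto)
  also have "wronskian (map deriv (take k qs @ drop (Suc k) qs)) x =
     prod_list (map fst (map (\<lambda>cg. (fst cg, \<lambda>y. \<psi> y * snd cg y)) cgs)) *
     wronskian (map snd (map (\<lambda>cg. (fst cg, \<lambda>y. \<psi> y * snd cg y)) cgs)) x"
  proof (rule W_deriv_scale[OF _ x])
    show "list_all2 (\<lambda>f cg. sm (snd cg) \<and> (\<forall>y>0. deriv f y = fst cg * snd cg y))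
       (take k qs @ drop (Suc k) qs) (map (\<lambda>cg. (fst cg, \<lambda>y. \<psi> y * snd cg y)) cgs)"
      using rel2 unfolding list_all2_map2 by (rule list_all2_mono) (auto intro: sm_mult psi)
  qed
  also have "map snd (map (\<lambda>cg. (fst cg, \<lambda>y. \<psi> y * snd cg y)) cgs) = map (\<lambda>g y. \<psi> y * g y) (map snd cgs)"
    by simp
  also have "wronskian (map (\<lambda>g y. \<psi> y * g y) (map snd cgs)) x = \<psi> x ^ length (map snd cgs) * wronskian (map snd cgs) x"
  proof (rule W_common[OF psi _ x])
    fix g assume "g \<in> set (map snd cgs)"
    then show "sm g" using rel2 unfolding list_all2_conv_all_nth in_set_conv_nth by auto
  qed
  finally show ?thesis using len len2 by (simp add: comp_def)
qed

lemma remove_mid: "take (length A) (A @ [z] @ B) @ drop (Suc (length A)) (A @ [z] @ B) = A @ B"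
  by simp

lemma nth_mid: "(A @ [z] @ B) ! length A = z"
  by simp


definition sh :: "(nat \<Rightarrow> real) \<Rightarrow> nat \<Rightarrow> real" where
  "sh a k = (if k = 0 then 0 else a (k - 1))"

definition lc :: "nat \<Rightarrow> real \<Rightarrow> nat \<Rightarrow> real" where
  "lc n b k = (if k \<le> n then (-1) ^ k * (pochhammer (b + real k + 1) (n - k) / fact (n - k)) / fact k else 0)"

lemma lc_eq: "n = k + m \<Longrightarrow> c = b + real k + 1 \<Longrightarrow> lc n b k = (-1) ^ k * pochhammer c m / fact m / fact k"
  by (simp add: lc_def)

lemma lc_zero: "n < k \<Longrightarrow> lc n b k = 0"
  by (simp add: lc_def)

lemma poch_Suc_both: "c * pochhammer (c + 1) m = (c + real m) * pochhammer c m"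
  using pochhammer_rec[of c m] pochhammer_rec'[of c m] by simp

lemma fact_Suc_r: "(fact (Suc m) :: real) = (1 + real m) * fact m"
  by (simp add: fact_Suc)

lemma alg2: fixes s P c fm fk d mm :: real assumes nz: "fm \<noteq> 0" "fk \<noteq> 0" "d \<noteq> 0" and r: "d = 1 + mm"
  shows "s * (c * P) / (d * fm) / fk + s * P / fm / fk = s * ((c + 1 + mm) * P) / (d * fm) / fk"
  using nz apply (simp add: field_simps) using r by (simp add: algebra_simps)

lemma lcP2: assumes "1 \<le> n" shows "lc n b k + lc (n - 1) (b + 1) k = lc n (b + 1) k"
proof (cases "k < n")
  case True
  then obtain m where "n = Suc (k + m)" using less_imp_Suc_add by blast
  then have n: "n = k + Suc m" by simp
  have l1: "lc n b k = (-1) ^ k * ((b + real k + 1) * pochhammer (b + real k + 1 + 1) m) / ((1 + real m) * fact m) / fact k"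
    by (subst lc_eq[OF n refl]) (simp only: pochhammer_rec fact_Suc_r)
  have l2: "lc (n - 1) (b + 1) k = (-1) ^ k * pochhammer (b + real k + 1 + 1) m / fact m / fact k"
    by (rule lc_eq) (use n in simp_all)
  have l3: "lc n (b + 1) k = (-1) ^ k * ((b + real k + 1 + 1 + real m) * pochhammer (b + real k + 1 + 1) m) / ((1 + real m) * fact m) / fact k"
    by (subst lc_eq[OF n, of "b + real k + 1 + 1"]) (simp, simp only: pochhammer_rec' fact_Suc_r)
  show ?thesis unfolding l1 l2 l3
    by (rule alg2) simp_all
next
  case False
  show ?thesis
  proof (cases "k = n")
    case True
    have "lc n b k = (-1) ^ k * pochhammer (b + real k + 1) 0 / fact 0 / fact k" by (rule lc_eq) (simp_all add: True)
    moreover have "lc n (b + 1) k = (-1) ^ k * pochhammer (b + 1 + real k + 1) 0 / fact 0 / fact k" by (rule lc_eq) (simp_all add: True)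
    moreover have "lc (n - 1) (b + 1) k = 0" by (rule lc_zero) (use True assms in simp)
    ultimately show ?thesis by simp
  next
    case False
    then have "n < k" using \<open>\<not> k < n\<close> by simp
    then show ?thesis by (simp add: lc_zero)
  qed
qed

lemma alg3: fixes s P0 P1 fi fm b c d ii mm :: real
  assumes nz: "fi \<noteq> 0" "fm \<noteq> 0" "d \<noteq> 0" and r: "d = 1 + ii" "c = b + ii + 1" "c * P1 = (c + mm) * P0"
  shows "b * (- s * P1 / fm / (d * fi)) - s * P1 / fm / fi = (c + mm) * (- s * P0 / fm / (d * fi))"
proof -
  have "b * (- s * P1 / fm / (d * fi)) - s * P1 / fm / fi = - s / (fm * d * fi) * ((b + d) * P1)"
    using nz by (simp add: field_simps)
  also have "b + d = c" using r by simp
  also have "c * P1 = (c + mm) * P0" by (rule r(3))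
  also have "- s / (fm * d * fi) * ((c + mm) * P0) = (c + mm) * (- s * P0 / fm / (d * fi))"
    using nz by (simp add: field_simps)
  finally show ?thesis .
qed

lemma alg3b: fixes P0 P1 fn b nn :: real
  assumes nz: "fn \<noteq> 0" and r: "b * P1 = (b + nn) * P0"
  shows "b * (P1 / fn) - 0 = (nn + b) * (P0 / fn)"
proof -
  have "b * (P1 / fn) - 0 = (b * P1) / fn" by simp
  also have "b * P1 = (b + nn) * P0" by (rule r)
  also have "(b + nn) * P0 / fn = (nn + b) * (P0 / fn)" by (simp add: algebra_simps)
  finally show ?thesis .
qed

lemma lcP3: assumes "1 \<le> n" shows "b * lc n b k - sh (lc (n - 1) (b + 1)) k = (real n + b) * lc n (b - 1) k"
proof (cases k)
  case 0
  have l1: "lc n b k = pochhammer (b + 1) n / fact n" by (subst lc_eq[of n k n "b + 1"]) (simp_all add: 0)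
  have l3: "lc n (b - 1) k = pochhammer b n / fact n" by (subst lc_eq[of n k n b]) (simp_all add: 0)
  have l2: "sh (lc (n - 1) (b + 1)) k = 0" using 0 by (simp add: sh_def)
  show ?thesis unfolding l1 l2 l3 by (rule alg3b) (simp_all add: poch_Suc_both)
next
  case (Suc i)
  show ?thesis
  proof (cases "k \<le> n")
    case True
    then obtain m where n: "n = k + m" using le_Suc_ex by blast
    have l1: "lc n b k = - ((-1) ^ i) * pochhammer (b + real k + 1) m / fact m / ((1 + real i) * fact i)"
      by (subst lc_eq[OF n refl]) (simp add: Suc fact_Suc_r)
    have l2: "sh (lc (n - 1) (b + 1)) k = (-1) ^ i * pochhammer (b + real k + 1) m / fact m / fact i"
      unfolding sh_def using Suc by (simp, subst lc_eq[of _ i m "b + real k + 1"]) (simp_all add: n)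
    have l3: "lc n (b - 1) k = - ((-1) ^ i) * pochhammer (b + real k) m / fact m / ((1 + real i) * fact i)"
      by (subst lc_eq[OF n, of "b + real k"]) (simp_all add: Suc fact_Suc_r)
    have nn: "real n + b = (b + real k) + real m" using n by simp
    show ?thesis unfolding l1 l2 l3 nn
      by (rule alg3[where ii = "real i", OF _ _ _ _ _ poch_Suc_both]) (simp_all add: Suc)
  next
    case False
    then have "lc n b k = 0" "lc (n - 1) (b + 1) i = 0" "lc n (b - 1) k = 0" using Suc assms by (simp_all add: lc_zero)
    then show ?thesis using Suc by (simp add: sh_def)
  qed
qed

lemma alg4: fixes s P C c fm fi dm di ii mm nn :: real
  assumes nz: "fi \<noteq> 0" "fm \<noteq> 0" "dm \<noteq> 0" "di \<noteq> 0"
    and r: "dm = 1 + mm" "di = 1 + ii" "nn = ii + 1 + mm" "C = c + ii + 2"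
  shows "(nn + 1) * (- s * ((C + mm) * P) / (dm * fm) / (di * fi)) =
         (nn + c + 1) * (- s * P / fm / (di * fi)) - s * ((C + mm) * P) / (dm * fm) / fi"
  using nz apply (simp add: field_simps) using r by (simp add: algebra_simps)

lemma alg4a: fixes P c fn dn nn :: real
  assumes nz: "fn \<noteq> 0" "dn \<noteq> 0" and r: "dn = 1 + nn"
  shows "(nn + 1) * ((c + 1 + nn) * P / (dn * fn)) = (nn + c + 1) * (P / fn) - 0"
  using nz apply (simp add: field_simps) using r by (simp add: algebra_simps)

lemma alg4b: fixes s fn dn nn :: real
  assumes nz: "fn \<noteq> 0" "dn \<noteq> 0" and r: "dn = 1 + nn"
  shows "(nn + 1) * (- s / (dn * fn)) = (nn + c + 1) * 0 - s / fn"
  using nz apply (simp add: field_simps) using r by (simp add: algebra_simps)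

lemma lcQ: "(real n + 1) * lc (n + 1) c k = (real n + c + 1) * lc n c k - sh (lc n (c + 1)) k"
proof (cases k)
  case 0
  have l1: "lc (n + 1) c k = (c + 1 + real n) * pochhammer (c + 1) n / ((1 + real n) * fact n)"
    by (subst lc_eq[of _ k "Suc n" "c + 1"]) (simp_all add: 0 pochhammer_rec' fact_Suc_r)
  have l2: "lc n c k = pochhammer (c + 1) n / fact n" by (subst lc_eq[of n k n "c + 1"]) (simp_all add: 0)
  have l3: "sh (lc n (c + 1)) k = 0" using 0 by (simp add: sh_def)
  show ?thesis unfolding l1 l2 l3 by (rule alg4a) simp_all
next
  case (Suc i)
  show ?thesis
  proof (cases "k \<le> n")
    case True
    then obtain m where n: "n = k + m" using le_Suc_ex by blast
    have l1: "lc (n + 1) c k = - ((-1) ^ i) * ((c + real k + 1 + real m) * pochhammer (c + real k + 1) m) / ((1 + real m) * fact m) / ((1 + real i) * fact i)"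
      by (subst lc_eq[of _ k "Suc m" "c + real k + 1"]) (simp_all add: n Suc fact_Suc_r pochhammer_rec')
    have l2: "lc n c k = - ((-1) ^ i) * pochhammer (c + real k + 1) m / fact m / ((1 + real i) * fact i)"
      by (subst lc_eq[OF n, of "c + real k + 1"]) (simp_all add: Suc fact_Suc_r)
    have l3: "sh (lc n (c + 1)) k = (-1) ^ i * ((c + real k + 1 + real m) * pochhammer (c + real k + 1) m) / ((1 + real m) * fact m) / fact i"
      unfolding sh_def using Suc
      by (simp, subst lc_eq[of _ i "Suc m" "c + real k + 1"]) (simp_all add: n fact_Suc_r pochhammer_rec')
    show ?thesis unfolding l1 l2 l3
      by (rule alg4[where ii = "real i"]) (simp_all add: Suc n)
  next
    case False
    show ?thesis
    proof (cases "k = n + 1")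
      case True
      have l1: "lc (n + 1) c k = - ((-1) ^ n) / ((1 + real n) * fact n)"
        by (subst lc_eq[of _ k 0 "c + real k + 1"]) (simp_all add: True fact_Suc_r)
      have l2: "lc n c k = 0" using True by (simp add: lc_zero)
      have l3: "sh (lc n (c + 1)) k = (-1) ^ n / fact n"
        unfolding sh_def using True by (simp, subst lc_eq[of _ n 0 "c + 1 + real n + 1"]) simp_all
      show ?thesis unfolding l1 l2 l3 by (rule alg4b) simp_all
    next
      case False
      then have "lc (n + 1) c k = 0" "lc n c k = 0" "lc n (c + 1) i = 0" using Suc \<open>\<not> k \<le> n\<close> by (simp_all add: lc_zero)
      then show ?thesis using Suc by (simp add: sh_def)
    qed
  qed
qed

definition km :: "real \<Rightarrow> real \<Rightarrow> nat \<Rightarrow> real" where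
  "km a b k = pochhammer a k / pochhammer b k / fact k"

lemma km_Suc: "km a b (Suc k) = (a + real k) * pochhammer a k / ((b + real k) * pochhammer b k) / ((1 + real k) * fact k)"
  unfolding km_def by (simp only: pochhammer_rec' fact_Suc_r)

lemma km_0[simp]: "km a b 0 = 1" by (simp add: km_def)

lemma notint_add: "b \<notin> \<int> \<Longrightarrow> b + real k \<noteq> 0"
proof
  assume "b \<notin> \<int>" "b + real k = 0"
  then have "b = - of_nat k" by simp
  then have "b \<in> \<int>" by simp
  then show False using \<open>b \<notin> \<int>\<close> by simp
qed

lemma poch_nz: fixes b :: real assumes "b \<notin> \<int>" shows "pochhammer b k \<noteq> 0"
proof
  assume "pochhammer b k = 0"
  then obtain j where "b = - of_nat j" using pochhammer_eq_0_iff[of b k] by blast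
  then have "b \<in> \<int>" by simp
  then show False using assms by simp
qed

lemma notint_m1: "(b::real) \<notin> \<int> \<Longrightarrow> b - 1 \<notin> \<int>"
  by (metis Ints_1 Ints_add diff_add_cancel)

lemma notint_p1: "(b::real) \<notin> \<int> \<Longrightarrow> b + 1 \<notin> \<int>"
  by (metis Ints_1 Ints_diff add_diff_cancel)

lemma notint_nz0: "(b::real) \<notin> \<int> \<Longrightarrow> b \<noteq> 0" by auto

lemma algKA: fixes Pa Pb Q fk b kk :: real
  assumes nz: "Pb \<noteq> 0" "Q \<noteq> 0" "fk \<noteq> 0" and r: "(b - 1) * Pb = (b - 1 + kk) * Q"
  shows "(b - 1) * (Pa / Pb / fk) + kk * (Pa / Pb / fk) = (b - 1) * (Pa / Q / fk)"
proof -
  have q: "(b - 1 + kk) / Pb = (b - 1) / Q"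
    using nz by (simp add: frac_eq_eq r)
  have "(b - 1) * (Pa / Pb / fk) + kk * (Pa / Pb / fk) = (b - 1 + kk) / Pb * (Pa / fk)"
    using nz by (simp add: field_simps)
  also have "\<dots> = (b - 1) / Q * (Pa / fk)" by (simp only: q)
  also have "\<dots> = (b - 1) * (Pa / Q / fk)" using nz by (simp add: field_simps)
  finally show ?thesis .
qed

lemma kmA: assumes "b \<notin> \<int>" shows "(b - 1) * km a b k + real k * km a b k = (b - 1) * km a (b - 1) k"
  unfolding km_def
proof (rule algKA)
  show "(b - 1) * pochhammer b k = (b - 1 + real k) * pochhammer (b - 1) k"
    using poch_Suc_both[of "b - 1" k] by simp
qed (use poch_nz[OF assms] poch_nz[OF notint_m1[OF assms]] in auto)

lemma algKB: fixes Pa Pb R fk b a kk u v :: real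
  assumes nz: "Pb \<noteq> 0" "R \<noteq> 0" "fk \<noteq> 0" "b \<noteq> 0" "u \<noteq> 0" "v \<noteq> 0" and r: "u = b + kk" "v = 1 + kk" "b * R = u * Pb"
  shows "v * ((a + kk) * Pa / (u * Pb) / (v * fk)) - Pa / Pb / fk = (a - b) / b * (Pa / R / fk)"
proof -
  have e1: "v * ((a + kk) * Pa / (u * Pb) / (v * fk)) - Pa / Pb / fk = Pa / fk * ((a + kk - u) / (u * Pb))"
    using nz by (simp add: field_simps)
  have e2: "a + kk - u = a - b" using r by simp
  have e3: "u * Pb = b * R" using r by simp
  have e4: "Pa / fk * ((a - b) / (b * R)) = (a - b) / b * (Pa / R / fk)"
    using nz by (simp add: field_simps)
  show ?thesis by (simp only: e1, simp only: e2 e3 e4)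
qed

lemma kmB: assumes "b \<notin> \<int>" shows "diffs (km a b) k - km a b k = (a - b) / b * km a (b + 1) k"
proof -
  have d: "diffs (km a b) k = (1 + real k) * ((a + real k) * pochhammer a k / ((b + real k) * pochhammer b k) / ((1 + real k) * fact k))"
    unfolding diffs_def km_Suc by simp
  show ?thesis unfolding d unfolding km_def
    by (rule algKB[OF _ _ _ _ _ _ refl refl poch_Suc_both])
       (use assms poch_nz[OF assms] poch_nz[OF notint_p1[OF assms]] notint_add[OF assms] in auto)
qed

lemma algKC: fixes Pa Pb fi b a ii u v w :: real
  assumes nz: "Pb \<noteq> 0" "fi \<noteq> 0" "w \<noteq> 0" "u \<noteq> 0" "v \<noteq> 0" and r: "w = b - 1" "u = b + ii" "v = 1 + ii"
  shows "w * ((a + ii) * Pa / (u * Pb) / (v * fi)) - Pa / Pb / fi + v * ((a + ii) * Pa / (u * Pb) / (v * fi))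
     = w * ((a - 1) * Pa / (w * Pb) / (v * fi))"
  using nz apply (simp add: field_simps) apply (simp only: r) by (simp add: algebra_simps)

lemma kmC: assumes "b \<notin> \<int>" shows "(b - 1) * km a b k - sh (km a b) k + real k * km a b k = (b - 1) * km (a - 1) (b - 1) k"
proof (cases k)
  case 0 then show ?thesis by (simp add: sh_def)
next
  case (Suc i)
  have e: "km (a - 1) (b - 1) k = (a - 1) * pochhammer a i / ((b - 1) * pochhammer b i) / ((1 + real i) * fact i)"
    unfolding km_def Suc by (simp only: pochhammer_rec fact_Suc_r) simp
  have s: "sh (km a b) k = pochhammer a i / pochhammer b i / fact i" using Suc by (simp add: sh_def km_def)
  show ?thesis unfolding e s unfolding Suc km_Suc of_nat_Suc
    by (rule algKC[OF _ _ _ _ _ refl refl refl]) (use assms poch_nz[OF assms] notint_add[OF assms] notint_m1[OF assms] in auto)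
qed


definition ps :: "(nat \<Rightarrow> real) \<Rightarrow> real \<Rightarrow> real" where
  "ps a y = (\<Sum>k. a k * y ^ k)"

definition entire :: "(nat \<Rightarrow> real) \<Rightarrow> bool" where
  "entire a \<longleftrightarrow> (\<forall>y. summable (\<lambda>k. a k * y ^ k))"

lemma entire_add: "entire a \<Longrightarrow> entire b \<Longrightarrow> entire (\<lambda>k. a k + b k)"
  unfolding entire_def by (auto simp: distrib_right intro: summable_add)

lemma entire_diff: "entire a \<Longrightarrow> entire b \<Longrightarrow> entire (\<lambda>k. a k - b k)"
  unfolding entire_def by (auto simp: left_diff_distrib intro: summable_diff)

lemma entire_cmult: "entire a \<Longrightarrow> entire (\<lambda>k. c * a k)"
  unfolding entire_def by (auto simp: mult.assoc intro: summable_mult)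

lemma entire_diffs: "entire a \<Longrightarrow> entire (diffs a)"
  unfolding entire_def by (auto intro: termdiff_converges_all)

lemma sums_sh: assumes "entire a" shows "(\<lambda>k. sh a k * y ^ k) sums (y * ps a y)"
proof -
  have "(\<lambda>k. a k * y ^ k) sums ps a y" using assms unfolding entire_def ps_def by (auto intro: summable_sums)
  then have "(\<lambda>k. y * (a k * y ^ k)) sums (y * ps a y)" by (rule sums_mult)
  then have "(\<lambda>k. sh a (Suc k) * y ^ (Suc k)) sums (y * ps a y)" by (simp add: sh_def algebra_simps)
  then show ?thesis by (subst (asm) sums_Suc_iff) (simp add: sh_def)
qed

lemma entire_sh: "entire a \<Longrightarrow> entire (sh a)"
  unfolding entire_def using sums_sh[unfolded entire_def] sums_summable by blast

lemma ps_sh: "entire a \<Longrightarrow> y * ps a y = ps (sh a) y"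
  unfolding ps_def[of "sh a"] using sums_sh sums_unique by metis

lemma ps_add: "entire a \<Longrightarrow> entire b \<Longrightarrow> ps a y + ps b y = ps (\<lambda>k. a k + b k) y"
  unfolding ps_def entire_def by (subst suminf_add) (auto simp: distrib_right)

lemma ps_diff: "entire a \<Longrightarrow> entire b \<Longrightarrow> ps a y - ps b y = ps (\<lambda>k. a k - b k) y"
  unfolding ps_def entire_def by (subst suminf_diff) (auto simp: left_diff_distrib)

lemma ps_cmult: "entire a \<Longrightarrow> c * ps a y = ps (\<lambda>k. c * a k) y"
  unfolding ps_def entire_def by (subst suminf_mult[symmetric]) (auto simp: mult.assoc)

lemma ps_deriv: "entire a \<Longrightarrow> (ps a has_real_derivative ps (diffs a) y) (at y)"
  unfolding ps_def entire_def using termdiffs_strong_converges_everywhere[of a y]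
  by (simp add: fun_eq_iff)

lemma ps_cong: "(\<And>k. a k = b k) \<Longrightarrow> ps a y = ps b y" by (simp add: ps_def)

lemma sh_diffs: "sh (diffs a) = (\<lambda>k. of_nat k * a k)"
  by (auto simp: sh_def diffs_def fun_eq_iff)

section \<open>Laguerre\<close>

lemma entire_lc: "entire (lc n b)"
  unfolding entire_def
proof
  fix y :: real
  show "summable (\<lambda>k. lc n b k * y ^ k)"
    by (rule summable_finite[of "{..n}"]) (simp_all add: lc_zero)
qed

lemma laguerre_ps: "laguerre n b y = ps (lc n b) y"
proof -
  have "ps (lc n b) y = (\<Sum>k\<le>n. lc n b k * y ^ k)"
    unfolding ps_def by (rule suminf_finite) (auto simp: lc_zero)
  also have "\<dots> = laguerre n b y" unfolding laguerre_def
    by (rule sum.cong[OF refl]) (simp add: lc_def)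
  finally show ?thesis by simp
qed

definition ld :: "nat \<Rightarrow> real \<Rightarrow> real \<Rightarrow> real" where
  "ld n b y = (if n = 0 then 0 else - laguerre (n - 1) (b + 1) y)"

lemma diffs_lc: "diffs (lc n b) = (\<lambda>k. if n = 0 then 0 else - lc (n - 1) (b + 1) k)"
proof
  fix k
  show "diffs (lc n b) k = (if n = 0 then 0 else - lc (n - 1) (b + 1) k)"
  proof (cases "Suc k \<le> n")
    case True
    then obtain m where n: "n = Suc k + m" using le_Suc_ex by blast
    have "lc n b (Suc k) = (-1) ^ Suc k * pochhammer (b + 1 + real k + 1) m / fact m / fact (Suc k)"
      by (rule lc_eq) (simp_all add: n)
    moreover have "lc (n - 1) (b + 1) k = (-1) ^ k * pochhammer (b + 1 + real k + 1) m / fact m / fact k"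
      by (rule lc_eq) (simp_all add: n)
    ultimately show ?thesis using n by (simp add: diffs_def fact_Suc_r del: of_nat_Suc)
  next
    case False
    then have "lc n b (Suc k) = 0" by (simp add: lc_zero)
    moreover have "n = 0 \<or> lc (n - 1) (b + 1) k = 0"
    proof (cases "n = 0")
      case False then have "n - 1 < k" using \<open>\<not> Suc k \<le> n\<close> by arith
      then show ?thesis by (simp add: lc_zero)
    qed simp
    ultimately show ?thesis by (auto simp: diffs_def)
  qed
qed

lemma laguerre_deriv: "(laguerre n b has_real_derivative ld n b y) (at y)"
proof -
  have "laguerre n b = ps (lc n b)" using laguerre_ps by (simp add: fun_eq_iff)
  moreover have "ps (diffs (lc n b)) y = ld n b y"
  proof (cases "n = 0")
    case True then show ?thesis unfolding diffs_lc ld_def by (simp add: ps_def)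
  next
    case False
    have "ps (diffs (lc n b)) y = ps (\<lambda>k. (-1) * lc (n - 1) (b + 1) k) y"
      unfolding diffs_lc using False by (intro ps_cong) simp
    also have "\<dots> = - laguerre (n - 1) (b + 1) y"
      unfolding laguerre_ps by (subst ps_cmult[OF entire_lc, symmetric]) simp
    finally show ?thesis using False by (simp add: ld_def)
  qed
  ultimately show ?thesis using ps_deriv[OF entire_lc] by metis
qed

lemma laguerre0[simp]: "laguerre 0 b y = 1"
  by (simp add: laguerre_def)

lemma LP2: "laguerre n b y - ld n b y = laguerre n (b + 1) y"
proof (cases "n = 0")
  case True then show ?thesis by (simp add: ld_def)
next
  case False
  then have "laguerre n b y + laguerre (n - 1) (b + 1) y = laguerre n (b + 1) y"
    unfolding laguerre_ps by (subst ps_add[OF entire_lc entire_lc]) (rule ps_cong, rule lcP2, simp)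
  then show ?thesis using False by (simp add: ld_def)
qed

lemma LP3: "b * laguerre n b y + y * ld n b y = (real n + b) * laguerre n (b - 1) y"
proof (cases "n = 0")
  case True then show ?thesis by (simp add: ld_def)
next
  case False
  have "b * laguerre n b y - y * laguerre (n - 1) (b + 1) y = (real n + b) * laguerre n (b - 1) y"
    unfolding laguerre_ps
    by (simp only: ps_sh[OF entire_lc] ps_cmult[OF entire_lc] ps_diff[OF entire_cmult[OF entire_lc] entire_sh[OF entire_lc]])
       (rule ps_cong, rule lcP3, use False in simp)
  then show ?thesis using False by (simp add: ld_def)
qed

lemma LQ: "(real n + 1) * laguerre (n + 1) c y = (real n + c + 1) * laguerre n c y - y * laguerre n (c + 1) y"
  unfolding laguerre_ps
  by (simp only: ps_sh[OF entire_lc] ps_cmult[OF entire_lc] ps_diff[OF entire_cmult[OF entire_lc] entire_sh[OF entire_lc]])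
     (rule ps_cong, rule lcQ)

lemma LP4: "(b - y) * laguerre n b y + y * ld n b y = (real n + 1) * laguerre (n + 1) (b - 1) y"
  using LP3[of b n y] LQ[of n "b - 1" y] by (simp add: algebra_simps)

section \<open>Kummer\<close>

lemma km_Suc': "km a b (Suc k) = km a b k * ((a + real k) / ((b + real k) * (real k + 1)))"
  by (subst km_Suc) (simp add: km_def divide_inverse inverse_mult_distrib ac_simps)

lemma entire_km: "entire (km a b)"
  unfolding entire_def
proof
  fix y :: real
  define r where "r = (\<lambda>k::nat. \<bar>a + real k\<bar> * \<bar>y\<bar> / (\<bar>b + real k\<bar> * (real k + 1)))"
  have "(r \<longlongrightarrow> 0) sequentially" unfolding r_def by real_asymp
  then have "eventually (\<lambda>k. r k < 1/2) sequentially" by (rule order_tendstoD) simp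
  then obtain N where N: "\<And>k. k \<ge> N \<Longrightarrow> r k < 1/2" by (auto simp: eventually_sequentially)
  show "summable (\<lambda>k. km a b k * y ^ k)"
  proof (rule summable_ratio_test[of "1/2" N])
    fix k assume "k \<ge> N"
    then have rk: "r k \<le> 1/2" using N by fastforce
    have "norm (km a b (Suc k) * y ^ Suc k) = norm (km a b k * y ^ k) * r k"
      unfolding km_Suc' r_def by (simp add: abs_mult abs_divide)
    also have "\<dots> \<le> norm (km a b k * y ^ k) * (1/2)" by (rule mult_left_mono[OF rk]) simp
    finally show "norm (km a b (Suc k) * y ^ Suc k) \<le> 1/2 * norm (km a b k * y ^ k)" by simp
  qed simp
qed

lemma kummer_ps: "kummerM a b y = ps (km a b) y"
  unfolding kummerM_def ps_def km_def by (simp add: field_simps)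

lemma diffs_km: "diffs (km a b) = (\<lambda>k. a / b * km (a + 1) (b + 1) k)"
  by (auto simp: diffs_def km_def pochhammer_rec fact_Suc fun_eq_iff divide_inverse inverse_mult_distrib simp del: of_nat_Suc)

lemma kd_ps: "a / b * kummerM (a + 1) (b + 1) y = ps (diffs (km a b)) y"
  unfolding diffs_km kummer_ps by (subst ps_cmult[OF entire_km]) simp

lemma kummer_deriv: "(kummerM a b has_real_derivative a / b * kummerM (a + 1) (b + 1) y) (at y)"
proof -
  have "kummerM a b = ps (km a b)" using kummer_ps by (simp add: fun_eq_iff)
  then show ?thesis using ps_deriv[OF entire_km] kd_ps by metis
qed

lemma y_kd: "y * (a / b * kummerM (a + 1) (b + 1) y) = ps (\<lambda>k. real k * km a b k) y"
  unfolding kd_ps by (simp add: ps_sh entire_diffs entire_km sh_diffs)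

lemma entire_kk: "entire (\<lambda>k. real k * km a b k)"
  using entire_sh[OF entire_diffs[OF entire_km[of a b]]] by (simp add: sh_diffs)

lemma KA: assumes "b \<notin> \<int>"
  shows "(b - 1) * kummerM a b y + y * (a / b * kummerM (a + 1) (b + 1) y) = (b - 1) * kummerM a (b - 1) y"
  unfolding y_kd unfolding kummer_ps
  by (simp only: ps_cmult[OF entire_km] ps_add[OF entire_cmult[OF entire_km] entire_kk])
     (rule ps_cong, rule kmA[OF assms])

lemma KB: assumes "b \<notin> \<int>"
  shows "a / b * kummerM (a + 1) (b + 1) y - kummerM a b y = (a - b) / b * kummerM a (b + 1) y"
  unfolding kd_ps unfolding kummer_ps
  by (simp only: ps_cmult[OF entire_km] ps_diff[OF entire_diffs[OF entire_km] entire_km])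
     (rule ps_cong, rule kmB[OF assms])

lemma KC: assumes "b \<notin> \<int>"
  shows "(b - 1 - y) * kummerM a b y + y * (a / b * kummerM (a + 1) (b + 1) y) = (b - 1) * kummerM (a - 1) (b - 1) y"
proof -
  have "(b - 1 - y) * kummerM a b y + y * (a / b * kummerM (a + 1) (b + 1) y)
      = (b - 1) * kummerM a b y - y * kummerM a b y + y * (a / b * kummerM (a + 1) (b + 1) y)"
    by (simp add: algebra_simps)
  also have "\<dots> = (b - 1) * kummerM (a - 1) (b - 1) y"
    unfolding y_kd unfolding kummer_ps
    by (simp only: ps_sh[OF entire_km] ps_cmult[OF entire_km]
          ps_diff[OF entire_cmult[OF entire_km] entire_sh[OF entire_km]]
          ps_add[OF entire_diff[OF entire_cmult[OF entire_km] entire_sh[OF entire_km]] entire_kk])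
       (rule ps_cong, rule kmC[OF assms])
  finally show ?thesis .
qed


lemma sm_exp: "sm (\<lambda>y. exp (d * y))"
proof -
  have "sm (\<lambda>y. 1 * exp (d * y))"
  proof (rule sm_family[where P = "\<lambda>f. \<exists>c. f = (\<lambda>y. c * exp (d * y))"])
    fix f assume "\<exists>c. f = (\<lambda>y. c * exp (d * y))"
    then obtain c where f: "f = (\<lambda>y. c * exp (d * y))" by blast
    have "\<forall>x>0. (f has_real_derivative (c * d) * exp (d * x)) (at x)"
      unfolding f by (auto intro!: derivative_eq_intros)
    then show "\<exists>f'. (\<exists>c. f' = (\<lambda>y. c * exp (d * y))) \<and> (\<forall>x>0. (f has_real_derivative f' x) (at x))"
      by (intro exI[of _ "\<lambda>y. (c * d) * exp (d * y)"] conjI exI[of _ "c * d"] refl)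
  next
    show "\<exists>c. (\<lambda>y. 1 * exp (d * y)) = (\<lambda>y. c * exp (d * y))" by (rule exI[of _ 1]) (rule refl)
  qed
  then show ?thesis by simp
qed

lemma sm_powr: "sm (\<lambda>y. y powr e)"
proof -
  have "sm (\<lambda>y. 1 * y powr e)"
  proof (rule sm_family[where P = "\<lambda>f. \<exists>c e. \<forall>y>0. f y = c * y powr e"])
    fix f :: "real \<Rightarrow> real" assume "\<exists>c e. \<forall>y>0. f y = c * y powr e"
    then obtain c e where f: "\<forall>y>0. f y = c * y powr e" by blast
    have "\<forall>x>0. (f has_real_derivative (c * e) * x powr (e - 1)) (at x)"
    proof (intro allI impI)
      fix x :: real assume x: "0 < x"
      have "((\<lambda>y. c * y powr e) has_real_derivative c * e * x powr (e - 1)) (at x)"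
        using DERIV_cmult[OF has_real_derivative_powr[OF x], of c e] by (simp add: mult.assoc)
      then show "(f has_real_derivative (c * e) * x powr (e - 1)) (at x)"
        by (rule has_field_derivative_transform_within_open[of _ _ _ "{0<..}"]) (use x f in auto)
    qed
    then show "\<exists>f'. (\<exists>c e. \<forall>y>0. f' y = c * y powr e) \<and> (\<forall>x>0. (f has_real_derivative f' x) (at x))"
    proof (intro exI[of _ "\<lambda>y. (c * e) * y powr (e - 1)"] conjI)
      show "\<exists>c' e'. \<forall>y>0. (c * e) * y powr (e - 1) = c' * y powr e'"
        by (rule exI[of _ "c * e"], rule exI[of _ "e - 1"]) simp
    qed simp
  next
    show "\<exists>c e'. \<forall>y>0. 1 * y powr e = c * y powr e'" by (rule exI[of _ 1], rule exI[of _ e]) simp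
  qed
  then show ?thesis by simp
qed

lemma sm_ps: assumes "entire a" shows "sm (\<lambda>y. ps a (\<sigma> * y))"
proof (rule sm_family[where P = "\<lambda>f. \<exists>a. entire a \<and> f = (\<lambda>y. ps a (\<sigma> * y))"])
  fix f assume "\<exists>a. entire a \<and> f = (\<lambda>y. ps a (\<sigma> * y))"
  then obtain a where a: "entire a" and f: "f = (\<lambda>y. ps a (\<sigma> * y))" by blast
  have "\<forall>x>0. (f has_real_derivative ps (\<lambda>k. \<sigma> * diffs a k) (\<sigma> * x)) (at x)"
  proof (intro allI impI)
    fix x :: real
    have "(f has_real_derivative ps (diffs a) (\<sigma> * x) * \<sigma>) (at x)"
      unfolding f by (rule DERIV_chain2[OF ps_deriv[OF a]]) (auto intro!: derivative_eq_intros)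
    then show "(f has_real_derivative ps (\<lambda>k. \<sigma> * diffs a k) (\<sigma> * x)) (at x)"
      using ps_cmult[OF entire_diffs[OF a], of \<sigma> "\<sigma> * x"] by (simp add: mult.commute)
  qed
  moreover have "entire (\<lambda>k. \<sigma> * diffs a k)" by (intro entire_cmult entire_diffs a)
  ultimately show "\<exists>f'. (\<exists>a. entire a \<and> f' = (\<lambda>y. ps a (\<sigma> * y))) \<and> (\<forall>x>0. (f has_real_derivative f' x) (at x))"
    by (intro exI[of _ "\<lambda>y. ps (\<lambda>k. \<sigma> * diffs a k) (\<sigma> * y)"] conjI exI[of _ "\<lambda>k. \<sigma> * diffs a k"] refl)
next
  show "\<exists>a'. entire a' \<and> (\<lambda>y. ps a (\<sigma> * y)) = (\<lambda>y. ps a' (\<sigma> * y))"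
    by (rule exI[of _ a]) (simp add: assms)
qed

lemma sm_L: "sm (\<lambda>y. laguerre n b (\<sigma> * y))"
  using sm_ps[OF entire_lc, of n b \<sigma>] by (simp add: laguerre_ps[symmetric])

lemma sm_K: "sm (\<lambda>y. kummerM a b (\<sigma> * y))"
  using sm_ps[OF entire_km, of a b \<sigma>] by (simp add: kummer_ps[symmetric])

lemma sm_GL: "sm (\<lambda>y. exp (d * y) * y powr e * laguerre n b (\<sigma> * y))"
  by (intro sm_mult sm_exp sm_powr sm_L)

lemma sm_GK: "sm (\<lambda>y. exp (d * y) * y powr e * kummerM a b (\<sigma> * y))"
  by (intro sm_mult sm_exp sm_powr sm_K)

lemma sm_G: "sm (\<lambda>y. exp (d * y) * y powr e)"
  by (intro sm_mult sm_exp sm_powr)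

lemma ring1: fixes E Q y B A d e \<sigma> :: real
  shows "E * (Q * y) * (B * \<sigma>) + (E * (e * Q) + E * d * (Q * y)) * A = E * Q * ((d * y + e) * A + \<sigma> * y * B)"
  by (simp add: algebra_simps)

lemma DERq:
  assumes P: "\<And>z. (P has_real_derivative P' z) (at z)" and y: "0 < y"
    and K: "(d * y + e) * P (\<sigma> * y) + \<sigma> * y * P' (\<sigma> * y) = K"
  shows "deriv (\<lambda>y. exp (d * y) * y powr e * P (\<sigma> * y)) y = exp (d * y) * y powr (e - 1) * K"
proof -
  have pe: "y powr e = y powr (e - 1) * y" using powr_add[of y "e - 1" 1] y by simp
  have dP: "((\<lambda>y. P (\<sigma> * y)) has_real_derivative P' (\<sigma> * y) * \<sigma>) (at y)"
    by (rule DERIV_chain2[OF P]) (auto intro!: derivative_eq_intros)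
  have dE: "((\<lambda>y. exp (d * y)) has_real_derivative exp (d * y) * d) (at y)"
    by (auto intro!: derivative_eq_intros)
  have "((\<lambda>y. exp (d * y) * y powr e * P (\<sigma> * y)) has_real_derivative
     exp (d * y) * y powr e * (P' (\<sigma> * y) * \<sigma>) + (exp (d * y) * (e * y powr (e - 1)) + exp (d * y) * d * y powr e) * P (\<sigma> * y)) (at y)"
    by (rule DERIV_mult'[OF DERIV_mult'[OF dE has_real_derivative_powr[OF y]] dP])
  moreover have "exp (d * y) * y powr e * (P' (\<sigma> * y) * \<sigma>) + (exp (d * y) * (e * y powr (e - 1)) + exp (d * y) * d * y powr e) * P (\<sigma> * y)
       = exp (d * y) * y powr (e - 1) * K"
    unfolding K[symmetric] pe by (rule ring1)
  ultimately show ?thesis by (simp add: DERIV_imp_deriv)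
qed

lemma DERq_L:
  assumes "0 < y" "(d * y + e) * laguerre n b (\<sigma> * y) + \<sigma> * y * ld n b (\<sigma> * y) = K"
  shows "deriv (\<lambda>y. exp (d * y) * y powr e * laguerre n b (\<sigma> * y)) y = exp (d * y) * y powr (e - 1) * K"
  by (rule DERq[OF laguerre_deriv assms])

lemma DERq_K:
  assumes "0 < y" "(d * y + e) * kummerM a b (\<sigma> * y) + \<sigma> * y * (a / b * kummerM (a + 1) (b + 1) (\<sigma> * y)) = K"
  shows "deriv (\<lambda>y. exp (d * y) * y powr e * kummerM a b (\<sigma> * y)) y = exp (d * y) * y powr (e - 1) * K"
  by (rule DERq[OF kummer_deriv assms])


lemma mem_shift: "k \<in> maya_shift M t \<longleftrightarrow> k - t \<in> M"
  unfolding maya_shift_def image_iff by (metis add.commute diff_add_cancel add_diff_cancel_left')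

lemma sl_Suc: fixes S :: "nat set" assumes "finite S" shows "sorted_list_of_set (Suc ` S) = map Suc (sorted_list_of_set S)"
proof -
  have "sorted_wrt (<) (map Suc (sorted_list_of_set S)) \<and> set (map Suc (sorted_list_of_set S)) = Suc ` S
        \<and> length (map Suc (sorted_list_of_set S)) = card (Suc ` S)"
    using assms by (simp add: sorted_wrt_map card_image)
  then show ?thesis using sorted_list_of_set_unique[of "Suc ` S"] assms by blast
qed

lemma sl_0: fixes S :: "nat set" assumes "finite S" "0 \<in> S" shows "sorted_list_of_set S = 0 # sorted_list_of_set (S - {0})"
proof -
  have fin: "finite (S - {0})" using assms by simp
  have pos: "\<forall>y \<in> set (sorted_list_of_set (S - {0})). 0 < y" using fin by auto
  have "sorted_wrt (<) (0 # sorted_list_of_set (S - {0}))"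
    using pos by (simp add: strict_sorted_list_of_set)
  moreover have "set (0 # sorted_list_of_set (S - {0})) = S" using fin assms by auto
  moreover have "length (0 # sorted_list_of_set (S - {0})) = card S"
  proof -
    have "card S > 0" using assms card_gt_0_iff by blast
    then show ?thesis using fin assms by (simp add: card_Suc_Diff1)
  qed
  ultimately show ?thesis using sorted_list_of_set_unique[of S] assms by blast
qed

lemma fin_pos: "maya M \<Longrightarrow> finite {n::nat. int n \<in> M}"
proof -
  assume "maya M"
  then have "finite {k \<in> M. k \<ge> 0}" by (simp add: maya_def)
  moreover have eq: "{n::nat. int n \<in> M} = int -` {k \<in> M. k \<ge> 0}" by auto
  ultimately show ?thesis unfolding eq by (intro finite_vimageI) (auto simp: inj_on_def)
qed

lemma fin_neg: "maya M \<Longrightarrow> finite {n::nat. - int n - 1 \<notin> M}"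
proof -
  assume "maya M"
  then have "finite {k. k < 0 \<and> k \<notin> M}" by (simp add: maya_def)
  moreover have eq: "{n::nat. - int n - 1 \<notin> M} = (\<lambda>n. - int n - 1) -` {k. k < 0 \<and> k \<notin> M}" by auto
  moreover have "inj (\<lambda>n::nat. - int n - 1)" by (auto simp: inj_def)
  ultimately show ?thesis unfolding eq by (intro finite_vimageI)
qed

lemma last_pos: assumes "maya M" "maya_pos M \<noteq> [] \<and> last (maya_pos M) = 0" shows "0 \<in> M"
proof -
  have "last (maya_pos M) \<in> set (maya_pos M)" using assms(2) by (metis last_in_set)
  then have "0 \<in> {n::nat. int n \<in> M}" using assms fin_pos[OF assms(1)] by (simp add: maya_pos_def)
  then show ?thesis by simp
qed

lemma last_neg: assumes "maya M" "maya_neg M \<noteq> [] \<and> last (maya_neg M) = 0" shows "-1 \<notin> M"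
proof -
  have "last (maya_neg M) \<in> set (maya_neg M)" using assms(2) by (metis last_in_set)
  then have "0 \<in> {n::nat. - int n - 1 \<notin> M}" using assms fin_neg[OF assms(1)] by (simp add: maya_neg_def)
  then show ?thesis by simp
qed

lemma m1comm: "- 1 - (x::int) = - x - 1" by simp

lemma shiftA:
  assumes "maya M" "0 \<in> M"
  shows "maya_pos M = map Suc (maya_pos (maya_shift M (-1))) @ [0]"
    and "maya_neg (maya_shift M (-1)) = map Suc (maya_neg M)"
proof -
  define S where "S = {n::nat. int n \<in> M}"
  define P where "P = {n::nat. int n \<in> maya_shift M (-1)}"
  have finS: "finite S" using fin_pos[OF assms(1)] S_def by simp
  have P: "P = {n. int n + 1 \<in> M}" unfolding P_def by (simp add: mem_shift algebra_simps)
  have SP: "S - {0} = Suc ` P"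
  proof (rule Set.set_eqI)
    fix n show "n \<in> S - {0} \<longleftrightarrow> n \<in> Suc ` P"
      unfolding S_def P by (cases n) (auto simp: algebra_simps inj_image_mem_iff)
  qed
  have finP: "finite P" using finS SP by (metis finite_Diff finite_imageD inj_Suc)
  have "sorted_list_of_set S = 0 # map Suc (sorted_list_of_set P)"
    using sl_0[OF finS] assms(2) SP sl_Suc[OF finP] by (simp add: S_def)
  then show "maya_pos M = map Suc (maya_pos (maya_shift M (-1))) @ [0]"
    unfolding maya_pos_def S_def[symmetric] P_def[symmetric] by (simp add: rev_map)
  define N where "N = {n::nat. - int n - 1 \<notin> M}"
  have finN: "finite N" using fin_neg[OF assms(1)] N_def by simp
  have "{n::nat. - int n - 1 \<notin> maya_shift M (-1)} = Suc ` N"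
  proof (rule Set.set_eqI)
    fix n show "n \<in> {n::nat. - int n - 1 \<notin> maya_shift M (-1)} \<longleftrightarrow> n \<in> Suc ` N"
    proof (cases n)
      case 0 then show ?thesis using assms(2) by (auto simp: N_def mem_shift)
    next
      case (Suc x)
      have e: "- int (Suc x) - 1 - (-1) = - int x - 1" by simp
      show ?thesis unfolding Suc N_def mem_shift mem_Collect_eq e by (simp add: inj_image_mem_iff)
    qed
  qed
  then show "maya_neg (maya_shift M (-1)) = map Suc (maya_neg M)"
    unfolding maya_neg_def N_def[symmetric] by (simp add: sl_Suc[OF finN] rev_map)
qed

lemma shiftB:
  assumes "maya M" "-1 \<notin> M"
  shows "maya_neg M = map Suc (maya_neg (maya_shift M 1)) @ [0]"
    and "maya_pos (maya_shift M 1) = map Suc (maya_pos M)"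
proof -
  define S where "S = {n::nat. - int n - 1 \<notin> M}"
  define P where "P = {n::nat. - int n - 1 \<notin> maya_shift M 1}"
  have finS: "finite S" using fin_neg[OF assms(1)] S_def by simp
  have P: "P = {n. - int n - 2 \<notin> M}" unfolding P_def by (simp add: mem_shift algebra_simps)
  have SP: "S - {0} = Suc ` P"
  proof (rule Set.set_eqI)
    fix n show "n \<in> S - {0} \<longleftrightarrow> n \<in> Suc ` P"
      unfolding S_def P by (cases n) (auto simp: algebra_simps inj_image_mem_iff)
  qed
  have finP: "finite P" using finS SP by (metis finite_Diff finite_imageD inj_Suc)
  have "0 \<in> S" using assms(2) by (simp add: S_def)
  then have "sorted_list_of_set S = 0 # map Suc (sorted_list_of_set P)"
    using sl_0[OF finS] SP sl_Suc[OF finP] by simp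
  then show "maya_neg M = map Suc (maya_neg (maya_shift M 1)) @ [0]"
    unfolding maya_neg_def S_def[symmetric] P_def[symmetric] by (simp add: rev_map)
  define N where "N = {n::nat. int n \<in> M}"
  have finN: "finite N" using fin_pos[OF assms(1)] N_def by simp
  have "{n::nat. int n \<in> maya_shift M 1} = Suc ` N"
  proof (rule Set.set_eqI)
    fix n show "n \<in> {n::nat. int n \<in> maya_shift M 1} \<longleftrightarrow> n \<in> Suc ` N"
    proof (cases n)
      case 0 then show ?thesis using assms(2) by (auto simp: N_def mem_shift)
    next
      case (Suc x)
      have e: "- int (Suc x) - 1 - (-1) = - int x - 1" by simp
      show ?thesis unfolding Suc N_def mem_shift mem_Collect_eq e by (simp add: inj_image_mem_iff)
    qed
  qed
  then show "maya_pos (maya_shift M 1) = map Suc (maya_pos M)"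
    unfolding maya_pos_def N_def[symmetric] by (simp add: sl_Suc[OF finN] rev_map)
qed


definition G :: "real \<Rightarrow> real \<Rightarrow> nat \<Rightarrow> real \<Rightarrow> real \<Rightarrow> real \<Rightarrow> real" where
  "G d e n b \<sigma> = (\<lambda>y. exp (d * y) * y powr e * laguerre n b (\<sigma> * y))"

definition GK :: "real \<Rightarrow> real \<Rightarrow> real \<Rightarrow> real \<Rightarrow> real \<Rightarrow> real \<Rightarrow> real" where
  "GK d e a b \<sigma> = (\<lambda>y. exp (d * y) * y powr e * kummerM a b (\<sigma> * y))"

lemma sm_G_L: "sm (G d e n b \<sigma>)" unfolding G_def by (rule sm_GL)
lemma sm_G_K: "sm (GK d e a b \<sigma>)" unfolding GK_def by (rule sm_GK)

lemma la2_map: "(\<And>x. x \<in> set xs \<Longrightarrow> R (F x) (H x)) \<Longrightarrow> list_all2 R (map F xs) (map H xs)"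
  by (induction xs) auto

lemma prod_const: "prod_list (map (\<lambda>_. c) xs) = (c::real) ^ length xs"
  by (induction xs) auto

lemma pm1: "(-1::real) ^ j = 1 \<or> (-1::real) ^ j = -1" by (induction j) auto

lemma pw1: "0 < y \<Longrightarrow> y powr (e - 1) * (y * W) = y powr e * (W::real)"
  using powr_add[of y "e - 1" 1] by simp

lemma BLK_L:
  assumes y: "0 < y" and K: "(d * y + e) * laguerre n b (\<sigma> * y) + \<sigma> * y * ld n b (\<sigma> * y) = c * W"
    and I: "exp (d * y) * y powr (e - 1) * W = \<psi> y * g y"
  shows "deriv (G d e n b \<sigma>) y = c * (\<psi> y * g y)"
  unfolding G_def DERq_L[OF y K] I[symmetric] by simp

lemma BLK_K:
  assumes y: "0 < y" and K: "(d * y + e) * kummerM a b (\<sigma> * y) + \<sigma> * y * (a / b * kummerM (a + 1) (b + 1) (\<sigma> * y)) = c * W"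
    and I: "exp (d * y) * y powr (e - 1) * W = \<psi> y * g y"
  shows "deriv (GK d e a b \<sigma>) y = c * (\<psi> y * g y)"
  unfolding GK_def DERq_K[OF y K] I[symmetric] by simp

lemma sm_eqI: "(\<And>y. 0 < y \<Longrightarrow> f y = g y) \<Longrightarrow> sm f \<Longrightarrow> sm g"
  by (rule sm_cong)




lemma B_ni0: "(al::real) \<notin> \<int> \<Longrightarrow> 1 - al \<notin> \<int>"
proof
  assume "al \<notin> \<int>" "1 - al \<in> \<int>"
  then have "1 - (1 - al) \<in> \<int>" by (intro Ints_diff) simp_all
  then show False using \<open>al \<notin> \<int>\<close> by simp
qed

context fixes al lam :: real assumes al: "al \<notin> \<int>"
begin

lemma ea: "- al - 1 = - (al + 1)" by simp
lemma ea2: "1 - al - 1 = - al" by simp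
lemma ea3: "- (lam - 1) - (al + 1) = - lam - al" by simp
lemma ea4: "1 - (al + 1) = - al" by simp
lemma B_ni: "1 - al \<notin> \<int>"
proof
  assume "1 - al \<in> \<int>"
  then have "1 - (1 - al) \<in> \<int>" by (intro Ints_diff) simp_all
  then show False using al by simp
qed


section \<open>Part a\<close>
lemma aB1: "sm (G 0 0 (Suc n) al 1) \<and> (\<forall>y>0. laguerre (Suc n) al y = 1 * G 0 0 (Suc n) al 1 y)"
proof (intro conjI sm_G_L sm_G_K allI impI)
  fix y :: real assume y: "0 < y"
  show "laguerre (Suc n) al y = 1 * G 0 0 (Suc n) al 1 y"
    using y unfolding G_def GK_def by (simp add: field_simps powr_minus exp_minus )
qed
lemma a0: "sm (G 0 0 0 al 1) \<and> (\<forall>y>0. laguerre 0 al y = 1 * G 0 0 0 al 1 y)"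
proof (intro conjI sm_G_L sm_G_K allI impI)
  fix y :: real assume y: "0 < y"
  show "laguerre 0 al y = 1 * G 0 0 0 al 1 y"
    using y unfolding G_def GK_def by (simp add: field_simps powr_minus exp_minus )
qed
lemma aB2: "sm (G 1 0 m al (-1)) \<and> (\<forall>y>0. exp y * laguerre m al (- y) = 1 * G 1 0 m al (-1) y)"
proof (intro conjI sm_G_L sm_G_K allI impI)
  fix y :: real assume y: "0 < y"
  show "exp y * laguerre m al (- y) = 1 * G 1 0 m al (-1) y"
    using y unfolding G_def GK_def by (simp add: field_simps powr_minus exp_minus )
qed
lemma aB3: "sm (G 0 (- al) m (- al) 1) \<and> (\<forall>y>0. y powr (- al) * laguerre m (- al) y = 1 * G 0 (- al) m (- al) 1 y)"
proof (intro conjI sm_G_L sm_G_K allI impI)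
  fix y :: real assume y: "0 < y"
  show "y powr (- al) * laguerre m (- al) y = 1 * G 0 (- al) m (- al) 1 y"
    using y unfolding G_def GK_def by (simp add: field_simps powr_minus exp_minus )
qed
lemma aB4: "sm (G 1 (- al) m (- al) (-1)) \<and> (\<forall>y>0. exp y * y powr (- al) * laguerre m (- al) (- y) = 1 * G 1 (- al) m (- al) (-1) y)"
proof (intro conjI sm_G_L sm_G_K allI impI)
  fix y :: real assume y: "0 < y"
  show "exp y * y powr (- al) * laguerre m (- al) (- y) = 1 * G 1 (- al) m (- al) (-1) y"
    using y unfolding G_def GK_def by (simp add: field_simps powr_minus exp_minus )
qed
lemma aH: "sm (GK 0 (- al) (- lam - al) (1 - al) 1) \<and> (\<forall>y>0. y powr (- al) * kummerM (- lam - al) (1 - al) y = 1 * GK 0 (- al) (- lam - al) (1 - al) 1 y)"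
proof (intro conjI sm_G_L sm_G_K allI impI)
  fix y :: real assume y: "0 < y"
  show "y powr (- al) * kummerM (- lam - al) (1 - al) y = 1 * GK 0 (- al) (- lam - al) (1 - al) 1 y"
    using y unfolding G_def GK_def by (simp add: field_simps powr_minus exp_minus )
qed
lemma aB1d: "sm (\<lambda>x. laguerre n (al + 1) x) \<and> (\<forall>y>0. deriv (G 0 0 (Suc n) al 1) y = (-1) * (1 * laguerre n (al + 1) y))"
proof (intro conjI allI impI)
  show "sm (\<lambda>x. laguerre n (al + 1) x)"
    by (rule sm_eqI[OF _ sm_G_L[of 0 0 n "al + 1" 1]]) (simp add: G_def GK_def )
  fix y :: real assume y: "0 < y"
  have K: "(0 * y + 0) * laguerre (Suc n) al (1 * y) + 1 * y * ld (Suc n) al (1 * y) = (-1) * (y * laguerre n (al + 1) y)"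
    by (simp add: ld_def)
  show "deriv (G 0 0 (Suc n) al 1) y = (-1) * (1 * laguerre n (al + 1) y)"
    by (rule BLK_L[OF y K]) (use y in \<open>simp add: field_simps powr_minus exp_minus powr_diff \<close>)
qed
lemma aB2d: "sm (\<lambda>x. exp x * laguerre m (al + 1) (- x)) \<and> (\<forall>y>0. deriv (G 1 0 m al (-1)) y = 1 * (1 * (exp y * laguerre m (al + 1) (- y))))"
proof (intro conjI allI impI)
  show "sm (\<lambda>x. exp x * laguerre m (al + 1) (- x))"
    by (rule sm_eqI[OF _ sm_G_L[of 1 0 m "al + 1" "-1"]]) (simp add: G_def GK_def )
  fix y :: real assume y: "0 < y"
  have K: "(1 * y + 0) * laguerre m al (-1 * y) + -1 * y * ld m al (-1 * y) = 1 * (y * laguerre m (al + 1) (- y))"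
    using LP2[of m al "- y"] by (simp add: algebra_simps)
  show "deriv (G 1 0 m al (-1)) y = 1 * (1 * (exp y * laguerre m (al + 1) (- y)))"
    by (rule BLK_L[OF y K]) (use y in \<open>simp add: field_simps powr_minus exp_minus powr_diff \<close>)
qed
lemma aB3d: "sm (\<lambda>x. x powr (- (al + 1)) * laguerre m (- (al + 1)) x) \<and> (\<forall>y>0. deriv (G 0 (- al) m (- al) 1) y = (real m - al) * (1 * (y powr (- (al + 1)) * laguerre m (- (al + 1)) y)))"
proof (intro conjI allI impI)
  show "sm (\<lambda>x. x powr (- (al + 1)) * laguerre m (- (al + 1)) x)"
    by (rule sm_eqI[OF _ sm_G_L[of 0 "- (al + 1)" m "- (al + 1)" 1]]) (simp add: G_def GK_def )
  fix y :: real assume y: "0 < y"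
  have K: "(0 * y + - al) * laguerre m (- al) (1 * y) + 1 * y * ld m (- al) (1 * y) = (real m - al) * laguerre m (- (al + 1)) y"
    using LP3[of "- al" m y, unfolded ea] by (simp add: algebra_simps)
  show "deriv (G 0 (- al) m (- al) 1) y = (real m - al) * (1 * (y powr (- (al + 1)) * laguerre m (- (al + 1)) y))"
    by (rule BLK_L[OF y K]) (use y in \<open>simp add: field_simps powr_minus exp_minus powr_diff \<close>)
qed
lemma aB4d: "sm (\<lambda>x. exp x * x powr (- (al + 1)) * laguerre (Suc m) (- (al + 1)) (- x)) \<and> (\<forall>y>0. deriv (G 1 (- al) m (- al) (-1)) y = (real m + 1) * (1 * (exp y * y powr (- (al + 1)) * laguerre (Suc m) (- (al + 1)) (- y))))"
proof (intro conjI allI impI)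
  show "sm (\<lambda>x. exp x * x powr (- (al + 1)) * laguerre (Suc m) (- (al + 1)) (- x))"
    by (rule sm_eqI[OF _ sm_G_L[of 1 "- (al + 1)" "Suc m" "- (al + 1)" "-1"]]) (simp add: G_def GK_def )
  fix y :: real assume y: "0 < y"
  have K: "(1 * y + - al) * laguerre m (- al) (-1 * y) + -1 * y * ld m (- al) (-1 * y) = (real m + 1) * laguerre (Suc m) (- (al + 1)) (- y)"
    using LP4[of "- al" "- y" m, unfolded ea] by (simp add: algebra_simps)
  show "deriv (G 1 (- al) m (- al) (-1)) y = (real m + 1) * (1 * (exp y * y powr (- (al + 1)) * laguerre (Suc m) (- (al + 1)) (- y)))"
    by (rule BLK_L[OF y K]) (use y in \<open>simp add: field_simps powr_minus exp_minus powr_diff \<close>)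
qed
lemma aHd: "sm (htilde (al + 1) (lam - 1)) \<and> (\<forall>y>0. deriv (GK 0 (- al) (- lam - al) (1 - al) 1) y = (- al) * (1 * htilde (al + 1) (lam - 1) y))"
proof (intro conjI allI impI)
  show "sm (htilde (al + 1) (lam - 1))"
    by (rule sm_eqI[OF _ sm_G_K[of 0 "- (al + 1)" "- lam - al" "- al" 1]]) (unfold htilde_def ea3 ea4, simp add: G_def GK_def )
  fix y :: real assume y: "0 < y"
  have K: "(0 * y + - al) * kummerM (- lam - al) (1 - al) (1 * y) + 1 * y * ((- lam - al) / (1 - al) * kummerM (- lam - al + 1) (1 - al + 1) (1 * y)) = (- al) * kummerM (- lam - al) (- al) y"
    using KA[OF B_ni0[OF al], of "- lam - al" y, unfolded ea2] by (simp add: algebra_simps)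
  show "deriv (GK 0 (- al) (- lam - al) (1 - al) 1) y = (- al) * (1 * htilde (al + 1) (lam - 1) y)"
    by (rule BLK_K[OF y K]) (use y in \<open>unfold htilde_def ea3 ea4, simp add: field_simps powr_minus exp_minus powr_diff \<close>)
qed


lemma a0': "\<forall>y>0. G 0 0 0 al 1 y = 1" by (simp add: G_def)

lemma partA:
  assumes M1: "maya M1" and M2: "maya M2" and z: "0 \<in> M1"
  shows "\<exists>s::real. (s = 1 \<or> s = -1) \<and> (\<forall>x>0.
        Omega M1 M2 al (htilde al lam) x =
          s * ((- al) * (\<Prod>m'\<leftarrow>maya_neg M2. real m' - al) * (\<Prod>n'\<leftarrow>maya_neg M1. real n' + 1))
            * Omega (maya_shift M1 (-1)) M2 (al + 1) (htilde (al + 1) (lam - 1)) x)"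
proof -
  define P where "P = maya_pos (maya_shift M1 (-1))"
  define Q where "Q = maya_pos M2"
  define R where "R = maya_neg M2"
  define S where "S = maya_neg M1"
  have hP: "maya_pos M1 = map Suc P @ [0]" using shiftA(1)[OF M1 z] P_def by simp
  have hS: "maya_neg (maya_shift M1 (-1)) = map Suc S" using shiftA(2)[OF M1 z] S_def by simp
  define fs where "fs = seed_functions M1 M2 al @ [htilde al lam]"
  define A where "A = map (\<lambda>n. G 0 0 (Suc n) al 1) P"
  define B where "B = map (\<lambda>m. G 1 0 m al (-1)) Q @ map (\<lambda>m. G 0 (- al) m (- al) 1) R
      @ map (\<lambda>m. G 1 (- al) m (- al) (-1)) S @ [GK 0 (- al) (- lam - al) (1 - al) 1]"
  define qs where "qs = A @ [G 0 0 0 al 1] @ B"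
  define cgs where "cgs = map (\<lambda>n. (-1::real, \<lambda>x. laguerre n (al + 1) x)) P
      @ map (\<lambda>m. (1::real, \<lambda>x. exp x * laguerre m (al + 1) (- x))) Q
      @ map (\<lambda>m. (real m - al, \<lambda>x. x powr (- (al + 1)) * laguerre m (- (al + 1)) x)) R
      @ map (\<lambda>m. (real m + 1, \<lambda>x. exp x * x powr (- (al + 1)) * laguerre (Suc m) (- (al + 1)) (- x))) S
      @ [(- al, htilde (al + 1) (lam - 1))]"
  have fs_eq: "fs = map (\<lambda>n x. laguerre (Suc n) al x) P @ [\<lambda>x. laguerre 0 al x] @
      (map (\<lambda>m x. exp x * laguerre m al (- x)) Q @ map (\<lambda>m x. x powr (- al) * laguerre m (- al) x) R
       @ map (\<lambda>m x. exp x * x powr (- al) * laguerre m (- al) (- x)) S @ [htilde al lam])"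
    unfolding fs_def seed_functions_def hP Q_def[symmetric] R_def[symmetric] S_def[symmetric] by (simp add: fun_eq_iff)
  have rel1: "list_all2 (\<lambda>f q. sm q \<and> (\<forall>y>0. f y = (\<lambda>_. 1) y * q y)) fs qs"
    unfolding fs_eq qs_def A_def B_def
    by (intro list_all2_appendI la2_map list.rel_intros) (simp_all add: aB1 a0 a0' sm_G_L aB2 aB3 aB4 aH[simplified htilde_def] htilde_def)
  have k: "length A < length qs" unfolding qs_def by simp
  have qk: "qs ! length A = G 0 0 0 al 1" unfolding qs_def by (simp add: nth_append)
  have one: "\<forall>y>0. (qs ! length A) y = 1" unfolding qk by (rule a0')
  have rel2: "list_all2 (\<lambda>q cg. sm (snd cg) \<and> (\<forall>y>0. deriv q y = fst cg * ((\<lambda>_. 1) y * snd cg y)))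
                 (take (length A) qs @ drop (Suc (length A)) qs) cgs"
    unfolding qs_def remove_mid unfolding A_def B_def cgs_def append_assoc
    apply (intro list_all2_appendI la2_map list.rel_intros)
    apply (simp_all only: fst_conv snd_conv)
    apply (rule aB1d aB2d aB3d aB4d aHd)+
    done
  have sm1: "sm (\<lambda>_. 1)" by (rule sm_eqI[OF _ sm_G[of 0 0]]) simp
  have snd_eq: "map snd cgs = seed_functions (maya_shift M1 (-1)) M2 (al + 1) @ [htilde (al + 1) (lam - 1)]"
    unfolding cgs_def seed_functions_def hS P_def[symmetric] Q_def[symmetric] R_def[symmetric] by (simp add: comp_def)
  have fst_eq: "prod_list (map fst cgs) = (-1) ^ length P * ((- al) * (\<Prod>m'\<leftarrow>R. real m' - al) * (\<Prod>n'\<leftarrow>S. real n' + 1))"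
    unfolding cgs_def by (simp add: prod_const comp_def)
  have lens: "length (maya_pos M1) = Suc (length P)" "length (maya_neg (maya_shift M1 (-1))) = length S"
    using hP hS by simp_all
  show ?thesis
  proof (intro exI[of _ "(-1) ^ length P * (-1) ^ length P"] conjI allI impI)
    show "(-1::real) ^ length P * (-1) ^ length P = 1 \<or> (-1::real) ^ length P * (-1) ^ length P = -1"
      using pm1[of "length P + length P"] by (simp add: power_add)
    fix x :: real assume x: "0 < x"
    have W: "wronskian fs x = (-1) ^ length A * (\<lambda>_. 1) x ^ length fs * (\<lambda>_. 1) x ^ (length fs - 1)
            * prod_list (map fst cgs) * wronskian (map snd cgs) x"
      by (rule RED[OF sm1 sm1 x rel1 k one rel2])
    show "Omega M1 M2 al (htilde al lam) x =
          (-1) ^ length P * (-1) ^ length P * ((- al) * (\<Prod>m'\<leftarrow>maya_neg M2. real m' - al) * (\<Prod>n'\<leftarrow>maya_neg M1. real n' + 1))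
            * Omega (maya_shift M1 (-1)) M2 (al + 1) (htilde (al + 1) (lam - 1)) x"
      unfolding Omega_def Let_def fs_def[symmetric] W snd_eq[symmetric] fst_eq lens
      unfolding R_def[symmetric] S_def[symmetric] Q_def[symmetric] P_def[symmetric]
      by (simp add: A_def algebra_simps)
  qed
qed

end

lemma pref:
  assumes x: "0 < x" and eA: "A1 + real N * c1 + real (N - 1) * c2 = A2" and eB: "B1 + real N * d1 + real (N - 1) * d2 = B2"
  shows "exp (A1 * x) * x powr B1 * ((exp (c1 * x) * x powr d1) ^ N * (exp (c2 * x) * x powr d2) ^ (N - 1)) = exp (A2 * x) * x powr B2"
proof -
  have p: "(exp (c * x) * x powr d) ^ n = exp ((real n * c) * x) * x powr (real n * d)" for c d n
    using x by (simp add: power_mult_distrib powr_power exp_of_nat_mult[symmetric] mult.assoc)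
  have "exp (A1 * x) * x powr B1 * ((exp (c1 * x) * x powr d1) ^ N * (exp (c2 * x) * x powr d2) ^ (N - 1))
     = exp ((A1 + real N * c1 + real (N - 1) * c2) * x) * x powr (B1 + real N * d1 + real (N - 1) * d2)"
    unfolding p by (simp add: powr_add exp_add distrib_right distrib_left mult_ac)
  then show ?thesis unfolding eA eB .
qed

context fixes al lam :: real assumes al: "al \<notin> \<int>"
begin

lemma eb: "- al + 1 = - (al - 1)" by simp
lemma eb3: "- (lam + 1) - (al - 1) = - lam - al" by simp
lemma eb4: "1 - (al - 1) = 1 - al + 1" by simp
lemma eb5: "(- lam - al - (1 - al)) / (1 - al) = - ((lam + 1) / (1 - al))"
proof -
  have "- lam - al - (1 - al) = - (lam + 1)" by simp
  then show ?thesis by (simp only: minus_divide_left)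
qed

section \<open>Part b\<close>
lemma bB1: "sm (G (-1) al n al 1) \<and> (\<forall>y>0. laguerre n al y = (exp (1 * y) * y powr (- al)) * G (-1) al n al 1 y)"
proof (intro conjI sm_G_L sm_G_K allI impI)
  fix y :: real assume y: "0 < y"
  show "laguerre n al y = (exp (1 * y) * y powr (- al)) * G (-1) al n al 1 y"
    using y unfolding G_def GK_def by (simp add: field_simps powr_minus exp_minus )
qed
lemma b0: "sm (G 0 0 0 (- al) (-1)) \<and> (\<forall>y>0. exp y * y powr (- al) * laguerre 0 (- al) (- y) = (exp (1 * y) * y powr (- al)) * G 0 0 0 (- al) (-1) y)"
proof (intro conjI sm_G_L sm_G_K allI impI)
  fix y :: real assume y: "0 < y"
  show "exp y * y powr (- al) * laguerre 0 (- al) (- y) = (exp (1 * y) * y powr (- al)) * G 0 0 0 (- al) (-1) y"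
    using y unfolding G_def GK_def by (simp add: field_simps powr_minus exp_minus )
qed
lemma bB2: "sm (G 0 al m al (-1)) \<and> (\<forall>y>0. exp y * laguerre m al (- y) = (exp (1 * y) * y powr (- al)) * G 0 al m al (-1) y)"
proof (intro conjI sm_G_L sm_G_K allI impI)
  fix y :: real assume y: "0 < y"
  show "exp y * laguerre m al (- y) = (exp (1 * y) * y powr (- al)) * G 0 al m al (-1) y"
    using y unfolding G_def GK_def by (simp add: field_simps powr_minus exp_minus )
qed
lemma bB3: "sm (G (-1) 0 m (- al) 1) \<and> (\<forall>y>0. y powr (- al) * laguerre m (- al) y = (exp (1 * y) * y powr (- al)) * G (-1) 0 m (- al) 1 y)"
proof (intro conjI sm_G_L sm_G_K allI impI)
  fix y :: real assume y: "0 < y"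
  show "y powr (- al) * laguerre m (- al) y = (exp (1 * y) * y powr (- al)) * G (-1) 0 m (- al) 1 y"
    using y unfolding G_def GK_def by (simp add: field_simps powr_minus exp_minus )
qed
lemma bB4: "sm (G 0 0 (Suc m) (- al) (-1)) \<and> (\<forall>y>0. exp y * y powr (- al) * laguerre (Suc m) (- al) (- y) = (exp (1 * y) * y powr (- al)) * G 0 0 (Suc m) (- al) (-1) y)"
proof (intro conjI sm_G_L sm_G_K allI impI)
  fix y :: real assume y: "0 < y"
  show "exp y * y powr (- al) * laguerre (Suc m) (- al) (- y) = (exp (1 * y) * y powr (- al)) * G 0 0 (Suc m) (- al) (-1) y"
    using y unfolding G_def GK_def by (simp add: field_simps powr_minus exp_minus )
qed
lemma bH: "sm (GK (-1) 0 (- lam - al) (1 - al) 1) \<and> (\<forall>y>0. y powr (- al) * kummerM (- lam - al) (1 - al) y = (exp (1 * y) * y powr (- al)) * GK (-1) 0 (- lam - al) (1 - al) 1 y)"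
proof (intro conjI sm_G_L sm_G_K allI impI)
  fix y :: real assume y: "0 < y"
  show "y powr (- al) * kummerM (- lam - al) (1 - al) y = (exp (1 * y) * y powr (- al)) * GK (-1) 0 (- lam - al) (1 - al) 1 y"
    using y unfolding G_def GK_def by (simp add: field_simps powr_minus exp_minus )
qed
lemma bB1d: "sm (\<lambda>x. laguerre (Suc n) (al - 1) x) \<and> (\<forall>y>0. deriv (G (-1) al n al 1) y = (real n + 1) * ((exp (-1 * y) * y powr (al - 1)) * laguerre (Suc n) (al - 1) y))"
proof (intro conjI allI impI)
  show "sm (\<lambda>x. laguerre (Suc n) (al - 1) x)"
    by (rule sm_eqI[OF _ sm_G_L[of 0 0 "Suc n" "al - 1" 1]]) (simp add: G_def GK_def )
  fix y :: real assume y: "0 < y"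
  have K: "(-1 * y + al) * laguerre n al (1 * y) + 1 * y * ld n al (1 * y) = (real n + 1) * laguerre (Suc n) (al - 1) y"
    using LP4[of al y n] by (simp add: algebra_simps)
  show "deriv (G (-1) al n al 1) y = (real n + 1) * ((exp (-1 * y) * y powr (al - 1)) * laguerre (Suc n) (al - 1) y)"
    by (rule BLK_L[OF y K]) (use y in \<open>simp add: field_simps powr_minus exp_minus powr_diff \<close>)
qed
lemma bB2d: "sm (\<lambda>x. exp x * laguerre m (al - 1) (- x)) \<and> (\<forall>y>0. deriv (G 0 al m al (-1)) y = (real m + al) * ((exp (-1 * y) * y powr (al - 1)) * (exp y * laguerre m (al - 1) (- y))))"
proof (intro conjI allI impI)
  show "sm (\<lambda>x. exp x * laguerre m (al - 1) (- x))"
    by (rule sm_eqI[OF _ sm_G_L[of 1 0 m "al - 1" "-1"]]) (simp add: G_def GK_def )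
  fix y :: real assume y: "0 < y"
  have K: "(0 * y + al) * laguerre m al (-1 * y) + -1 * y * ld m al (-1 * y) = (real m + al) * laguerre m (al - 1) (- y)"
    using LP3[of al m "- y"] by (simp add: algebra_simps)
  show "deriv (G 0 al m al (-1)) y = (real m + al) * ((exp (-1 * y) * y powr (al - 1)) * (exp y * laguerre m (al - 1) (- y)))"
    by (rule BLK_L[OF y K]) (use y in \<open>simp add: field_simps powr_minus exp_minus powr_diff \<close>)
qed
lemma bB3d: "sm (\<lambda>x. x powr (- (al - 1)) * laguerre m (- (al - 1)) x) \<and> (\<forall>y>0. deriv (G (-1) 0 m (- al) 1) y = (-1) * ((exp (-1 * y) * y powr (al - 1)) * (y powr (- (al - 1)) * laguerre m (- (al - 1)) y)))"
proof (intro conjI allI impI)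
  show "sm (\<lambda>x. x powr (- (al - 1)) * laguerre m (- (al - 1)) x)"
    by (rule sm_eqI[OF _ sm_G_L[of 0 "- (al - 1)" m "- (al - 1)" 1]]) (simp add: G_def GK_def )
  fix y :: real assume y: "0 < y"
  have K: "(-1 * y + 0) * laguerre m (- al) (1 * y) + 1 * y * ld m (- al) (1 * y) = (-1) * (y * laguerre m (- (al - 1)) y)"
    using LP2[of m "- al" y, unfolded eb] by (simp add: algebra_simps)
  show "deriv (G (-1) 0 m (- al) 1) y = (-1) * ((exp (-1 * y) * y powr (al - 1)) * (y powr (- (al - 1)) * laguerre m (- (al - 1)) y))"
    by (rule BLK_L[OF y K]) (use y in \<open>simp add: field_simps powr_minus exp_minus powr_diff \<close>)
qed
lemma bB4d: "sm (\<lambda>x. exp x * x powr (- (al - 1)) * laguerre m (- (al - 1)) (- x)) \<and> (\<forall>y>0. deriv (G 0 0 (Suc m) (- al) (-1)) y = 1 * ((exp (-1 * y) * y powr (al - 1)) * (exp y * y powr (- (al - 1)) * laguerre m (- (al - 1)) (- y))))"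
proof (intro conjI allI impI)
  show "sm (\<lambda>x. exp x * x powr (- (al - 1)) * laguerre m (- (al - 1)) (- x))"
    by (rule sm_eqI[OF _ sm_G_L[of 1 "- (al - 1)" m "- (al - 1)" "-1"]]) (simp add: G_def GK_def )
  fix y :: real assume y: "0 < y"
  have K: "(0 * y + 0) * laguerre (Suc m) (- al) (-1 * y) + -1 * y * ld (Suc m) (- al) (-1 * y) = 1 * (y * laguerre m (- (al - 1)) (- y))"
    unfolding ld_def eb by simp
  show "deriv (G 0 0 (Suc m) (- al) (-1)) y = 1 * ((exp (-1 * y) * y powr (al - 1)) * (exp y * y powr (- (al - 1)) * laguerre m (- (al - 1)) (- y)))"
    by (rule BLK_L[OF y K]) (use y in \<open>simp add: field_simps powr_minus exp_minus powr_diff \<close>)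
qed
lemma bHd: "sm (htilde (al - 1) (lam + 1)) \<and> (\<forall>y>0. deriv (GK (-1) 0 (- lam - al) (1 - al) 1) y = (- ((lam + 1) / (1 - al))) * ((exp (-1 * y) * y powr (al - 1)) * htilde (al - 1) (lam + 1) y))"
proof (intro conjI allI impI)
  show "sm (htilde (al - 1) (lam + 1))"
    by (rule sm_eqI[OF _ sm_G_K[of 0 "- (al - 1)" "- lam - al" "1 - al + 1" 1]]) (unfold htilde_def eb3 eb4, simp add: G_def GK_def )
  fix y :: real assume y: "0 < y"
  have K: "(-1 * y + 0) * kummerM (- lam - al) (1 - al) (1 * y) + 1 * y * ((- lam - al) / (1 - al) * kummerM (- lam - al + 1) (1 - al + 1) (1 * y)) = (- ((lam + 1) / (1 - al))) * (y * kummerM (- lam - al) (1 - al + 1) y)"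
  proof -
    have kb: "(- lam - al) / (1 - al) * kummerM (- lam - al + 1) (1 - al + 1) y - kummerM (- lam - al) (1 - al) y = - ((lam + 1) / (1 - al)) * kummerM (- lam - al) (1 - al + 1) y"
      using KB[where b = "1 - al" and a = "- lam - al" and y = y, OF B_ni0[OF al], unfolded eb5] .
    have "(-1 * y + 0) * kummerM (- lam - al) (1 - al) (1 * y) + 1 * y * ((- lam - al) / (1 - al) * kummerM (- lam - al + 1) (1 - al + 1) (1 * y))
       = y * ((- lam - al) / (1 - al) * kummerM (- lam - al + 1) (1 - al + 1) y - kummerM (- lam - al) (1 - al) y)"
      by (simp add: algebra_simps)
    also have "\<dots> = y * (- ((lam + 1) / (1 - al)) * kummerM (- lam - al) (1 - al + 1) y)" by (simp only: kb)
    finally show ?thesis by (simp only: mult_ac)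
  qed
  show "deriv (GK (-1) 0 (- lam - al) (1 - al) 1) y = (- ((lam + 1) / (1 - al))) * ((exp (-1 * y) * y powr (al - 1)) * htilde (al - 1) (lam + 1) y)"
    by (rule BLK_K[OF y K]) (use y in \<open>unfold htilde_def eb3 eb4, simp add: field_simps powr_minus exp_minus powr_diff \<close>)
qed


lemma b0': "\<forall>y>0. G 0 0 0 (- al) (-1) y = 1" by (simp add: G_def)

lemma partB:
  assumes M1: "maya M1" and M2: "maya M2" and z: "-1 \<notin> M1"
  shows "\<exists>s::real. (s = 1 \<or> s = -1) \<and> (\<forall>x>0.
        Omega M1 M2 al (htilde al lam) x =
          s * ((lam + 1) / (1 - al) * (\<Prod>n\<leftarrow>maya_pos M1. real n + 1) * (\<Prod>m\<leftarrow>maya_pos M2. real m + al))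
            * Omega (maya_shift M1 1) M2 (al - 1) (htilde (al - 1) (lam + 1)) x)"
proof -
  define P where "P = maya_pos M1"
  define Q where "Q = maya_pos M2"
  define R where "R = maya_neg M2"
  define Nn where "Nn = maya_neg (maya_shift M1 1)"
  have hN: "maya_neg M1 = map Suc Nn @ [0]" using shiftB(1)[OF M1 z] Nn_def by simp
  have hP: "maya_pos (maya_shift M1 1) = map Suc P" using shiftB(2)[OF M1 z] P_def by simp
  define fs where "fs = seed_functions M1 M2 al @ [htilde al lam]"
  define A where "A = map (\<lambda>n. G (-1) al n al 1) P @ map (\<lambda>m. G 0 al m al (-1)) Q
      @ map (\<lambda>m. G (-1) 0 m (- al) 1) R @ map (\<lambda>m. G 0 0 (Suc m) (- al) (-1)) Nn"
  define B where "B = [GK (-1) 0 (- lam - al) (1 - al) 1]"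
  define qs where "qs = A @ [G 0 0 0 (- al) (-1)] @ B"
  define cgs where "cgs = map (\<lambda>n. (real n + 1, \<lambda>x. laguerre (Suc n) (al - 1) x)) P
      @ map (\<lambda>m. (real m + al, \<lambda>x. exp x * laguerre m (al - 1) (- x))) Q
      @ map (\<lambda>m. (-1::real, \<lambda>x. x powr (- (al - 1)) * laguerre m (- (al - 1)) x)) R
      @ map (\<lambda>m. (1::real, \<lambda>x. exp x * x powr (- (al - 1)) * laguerre m (- (al - 1)) (- x))) Nn
      @ [(- ((lam + 1) / (1 - al)), htilde (al - 1) (lam + 1))]"
  have fs_eq: "fs = (map (\<lambda>n x. laguerre n al x) P @ map (\<lambda>m x. exp x * laguerre m al (- x)) Q
       @ map (\<lambda>m x. x powr (- al) * laguerre m (- al) x) R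
       @ map (\<lambda>m x. exp x * x powr (- al) * laguerre (Suc m) (- al) (- x)) Nn)
       @ [\<lambda>x. exp x * x powr (- al) * laguerre 0 (- al) (- x)] @ [htilde al lam]"
    unfolding fs_def seed_functions_def hN P_def[symmetric] Q_def[symmetric] R_def[symmetric] by (simp add: fun_eq_iff)
  have rel1: "list_all2 (\<lambda>f q. sm q \<and> (\<forall>y>0. f y = (\<lambda>y. exp (1 * y) * y powr (- al)) y * q y)) fs qs"
    unfolding fs_eq qs_def A_def B_def
    apply (intro list_all2_appendI la2_map list.rel_intros)
    by (simp_all add: bB1 b0 b0' sm_G_L bB2 bB3 bB4 bH[simplified htilde_def] htilde_def)
  have k: "length A < length qs" unfolding qs_def by simp
  have qk: "qs ! length A = G 0 0 0 (- al) (-1)" unfolding qs_def by (simp add: nth_append)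
  have one: "\<forall>y>0. (qs ! length A) y = 1" unfolding qk by (rule b0')
  have rel2: "list_all2 (\<lambda>q cg. sm (snd cg) \<and> (\<forall>y>0. deriv q y = fst cg * ((\<lambda>y. exp (-1 * y) * y powr (al - 1)) y * snd cg y)))
                 (take (length A) qs @ drop (Suc (length A)) qs) cgs"
    unfolding qs_def remove_mid unfolding A_def B_def cgs_def append_assoc
    apply (intro list_all2_appendI la2_map list.rel_intros)
    apply (simp_all only: fst_conv snd_conv)
    apply (rule bB1d bB2d bB3d bB4d bHd)+
    done
  have W: "wronskian fs x = (-1) ^ length A * (exp (1 * x) * x powr (- al)) ^ length fs * (exp (-1 * x) * x powr (al - 1)) ^ (length fs - 1)
            * prod_list (map fst cgs) * wronskian (map snd cgs) x" if x: "0 < x" for x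
    using RED[OF sm_G sm_G x rel1 k one rel2] by simp
  have snd_eq: "map snd cgs = seed_functions (maya_shift M1 1) M2 (al - 1) @ [htilde (al - 1) (lam + 1)]"
    unfolding cgs_def seed_functions_def hP Nn_def[symmetric] Q_def[symmetric] R_def[symmetric] by (simp add: comp_def)
  have fst_eq: "prod_list (map fst cgs) = (-1) ^ length R * (-1) * ((lam + 1) / (1 - al) * (\<Prod>n\<leftarrow>P. real n + 1) * (\<Prod>m\<leftarrow>Q. real m + al))"
    unfolding cgs_def by (simp add: prod_const comp_def)
  have lens: "length (maya_neg M1) = Suc (length Nn)" "length (maya_pos (maya_shift M1 1)) = length P"
    using hN hP by simp_all
  have LF: "length fs = length P + length Q + length R + length Nn + 2" unfolding fs_eq by simp
  show ?thesis
  proof (intro exI[of _ "(-1) ^ length A * ((-1) ^ length R * (-1))"] conjI allI impI)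
    show "(-1::real) ^ length A * ((-1) ^ length R * (-1)) = 1 \<or> (-1::real) ^ length A * ((-1) ^ length R * (-1)) = -1"
      using pm1[of "Suc (length A + length R)"] by (simp add: power_add)
    fix x :: real assume x: "0 < x"
    have pf: "exp (- real (length Q + length (maya_neg M1)) * x) * x powr ((al + real (length P) + real (length Q)) * real (length R + length (maya_neg M1) + 1))
       * ((exp (1 * x) * x powr (- al)) ^ length fs * (exp (-1 * x) * x powr (al - 1)) ^ (length fs - 1))
       = exp (- real (length Q + length (maya_neg (maya_shift M1 1))) * x) * x powr ((al - 1 + real (length (maya_pos (maya_shift M1 1))) + real (length Q)) * real (length R + length (maya_neg (maya_shift M1 1)) + 1))"
      by (rule pref[OF x]) (simp_all add: LF lens Nn_def[symmetric] algebra_simps)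
    have "Omega M1 M2 al (htilde al lam) x = exp (- real (length Q + length (maya_neg M1)) * x) * x powr ((al + real (length P) + real (length Q)) * real (length R + length (maya_neg M1) + 1)) * wronskian fs x"
      unfolding Omega_def Let_def fs_def P_def Q_def R_def ..
    also have "\<dots> = ((-1) ^ length A * prod_list (map fst cgs)) * (exp (- real (length Q + length (maya_neg M1)) * x) * x powr ((al + real (length P) + real (length Q)) * real (length R + length (maya_neg M1) + 1))
       * ((exp (1 * x) * x powr (- al)) ^ length fs * (exp (-1 * x) * x powr (al - 1)) ^ (length fs - 1))) * wronskian (map snd cgs) x"
      unfolding W[OF x] by (simp only: mult_ac)
    also have "\<dots> = ((-1) ^ length A * prod_list (map fst cgs)) * Omega (maya_shift M1 1) M2 (al - 1) (htilde (al - 1) (lam + 1)) x"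
      unfolding pf unfolding Omega_def Let_def snd_eq Q_def R_def by (simp only: mult_ac)
    finally show "Omega M1 M2 al (htilde al lam) x = (-1) ^ length A * ((-1) ^ length R * (-1)) *
        ((lam + 1) / (1 - al) * (\<Prod>n\<leftarrow>maya_pos M1. real n + 1) * (\<Prod>m\<leftarrow>maya_pos M2. real m + al)) *
        Omega (maya_shift M1 1) M2 (al - 1) (htilde (al - 1) (lam + 1)) x"
      unfolding fst_eq P_def Q_def by (simp only: mult_ac)
  qed
qed

end

context fixes al lam :: real assumes al: "al \<notin> \<int>"
begin

lemma ec1: "- al - 1 = - (al + 1)" by simp
lemma ec2: "1 - al - 1 = - al" by simp
lemma ec3: "- lam - (al + 1) = - lam - al - 1" by simp
lemma ec4: "1 - (al + 1) = - al" by simp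

section \<open>Part c\<close>
lemma cB1: "sm (G (-1) 0 n al 1) \<and> (\<forall>y>0. laguerre n al y = (exp (1 * y) * y powr 0) * G (-1) 0 n al 1 y)"
proof (intro conjI sm_G_L sm_G_K allI impI)
  fix y :: real assume y: "0 < y"
  show "laguerre n al y = (exp (1 * y) * y powr 0) * G (-1) 0 n al 1 y"
    using y unfolding G_def GK_def by (simp add: field_simps powr_minus exp_minus )
qed
lemma c0: "sm (G 0 0 0 al (-1)) \<and> (\<forall>y>0. exp y * laguerre 0 al (- y) = (exp (1 * y) * y powr 0) * G 0 0 0 al (-1) y)"
proof (intro conjI sm_G_L sm_G_K allI impI)
  fix y :: real assume y: "0 < y"
  show "exp y * laguerre 0 al (- y) = (exp (1 * y) * y powr 0) * G 0 0 0 al (-1) y"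
    using y unfolding G_def GK_def by (simp add: field_simps powr_minus exp_minus )
qed
lemma cB2: "sm (G 0 0 (Suc m) al (-1)) \<and> (\<forall>y>0. exp y * laguerre (Suc m) al (- y) = (exp (1 * y) * y powr 0) * G 0 0 (Suc m) al (-1) y)"
proof (intro conjI sm_G_L sm_G_K allI impI)
  fix y :: real assume y: "0 < y"
  show "exp y * laguerre (Suc m) al (- y) = (exp (1 * y) * y powr 0) * G 0 0 (Suc m) al (-1) y"
    using y unfolding G_def GK_def by (simp add: field_simps powr_minus exp_minus )
qed
lemma cB3: "sm (G (-1) (- al) m (- al) 1) \<and> (\<forall>y>0. y powr (- al) * laguerre m (- al) y = (exp (1 * y) * y powr 0) * G (-1) (- al) m (- al) 1 y)"
proof (intro conjI sm_G_L sm_G_K allI impI)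
  fix y :: real assume y: "0 < y"
  show "y powr (- al) * laguerre m (- al) y = (exp (1 * y) * y powr 0) * G (-1) (- al) m (- al) 1 y"
    using y unfolding G_def GK_def by (simp add: field_simps powr_minus exp_minus )
qed
lemma cB4: "sm (G 0 (- al) m (- al) (-1)) \<and> (\<forall>y>0. exp y * y powr (- al) * laguerre m (- al) (- y) = (exp (1 * y) * y powr 0) * G 0 (- al) m (- al) (-1) y)"
proof (intro conjI sm_G_L sm_G_K allI impI)
  fix y :: real assume y: "0 < y"
  show "exp y * y powr (- al) * laguerre m (- al) (- y) = (exp (1 * y) * y powr 0) * G 0 (- al) m (- al) (-1) y"
    using y unfolding G_def GK_def by (simp add: field_simps powr_minus exp_minus )
qed
lemma cH: "sm (GK (-1) (- al) (- lam - al) (1 - al) 1) \<and> (\<forall>y>0. y powr (- al) * kummerM (- lam - al) (1 - al) y = (exp (1 * y) * y powr 0) * GK (-1) (- al) (- lam - al) (1 - al) 1 y)"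
proof (intro conjI sm_G_L sm_G_K allI impI)
  fix y :: real assume y: "0 < y"
  show "y powr (- al) * kummerM (- lam - al) (1 - al) y = (exp (1 * y) * y powr 0) * GK (-1) (- al) (- lam - al) (1 - al) 1 y"
    using y unfolding G_def GK_def by (simp add: field_simps powr_minus exp_minus )
qed
lemma cB1d: "sm (\<lambda>x. laguerre n (al + 1) x) \<and> (\<forall>y>0. deriv (G (-1) 0 n al 1) y = (-1) * ((exp (-1 * y) * y powr 0) * laguerre n (al + 1) y))"
proof (intro conjI allI impI)
  show "sm (\<lambda>x. laguerre n (al + 1) x)"
    by (rule sm_eqI[OF _ sm_G_L[of 0 0 n "al + 1" 1]]) (simp add: G_def GK_def )
  fix y :: real assume y: "0 < y"
  have K: "(-1 * y + 0) * laguerre n al (1 * y) + 1 * y * ld n al (1 * y) = (-1) * (y * laguerre n (al + 1) y)"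
    using LP2[of n al y] by (simp add: algebra_simps)
  show "deriv (G (-1) 0 n al 1) y = (-1) * ((exp (-1 * y) * y powr 0) * laguerre n (al + 1) y)"
    by (rule BLK_L[OF y K]) (use y in \<open>simp add: field_simps powr_minus exp_minus powr_diff \<close>)
qed
lemma cB2d: "sm (\<lambda>x. exp x * laguerre m (al + 1) (- x)) \<and> (\<forall>y>0. deriv (G 0 0 (Suc m) al (-1)) y = 1 * ((exp (-1 * y) * y powr 0) * (exp y * laguerre m (al + 1) (- y))))"
proof (intro conjI allI impI)
  show "sm (\<lambda>x. exp x * laguerre m (al + 1) (- x))"
    by (rule sm_eqI[OF _ sm_G_L[of 1 0 m "al + 1" "-1"]]) (simp add: G_def GK_def )
  fix y :: real assume y: "0 < y"
  have K: "(0 * y + 0) * laguerre (Suc m) al (-1 * y) + -1 * y * ld (Suc m) al (-1 * y) = 1 * (y * laguerre m (al + 1) (- y))"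
    by (simp add: ld_def)
  show "deriv (G 0 0 (Suc m) al (-1)) y = 1 * ((exp (-1 * y) * y powr 0) * (exp y * laguerre m (al + 1) (- y)))"
    by (rule BLK_L[OF y K]) (use y in \<open>simp add: field_simps powr_minus exp_minus powr_diff \<close>)
qed
lemma cB3d: "sm (\<lambda>x. x powr (- (al + 1)) * laguerre (Suc m) (- (al + 1)) x) \<and> (\<forall>y>0. deriv (G (-1) (- al) m (- al) 1) y = (real m + 1) * ((exp (-1 * y) * y powr 0) * (y powr (- (al + 1)) * laguerre (Suc m) (- (al + 1)) y)))"
proof (intro conjI allI impI)
  show "sm (\<lambda>x. x powr (- (al + 1)) * laguerre (Suc m) (- (al + 1)) x)"
    by (rule sm_eqI[OF _ sm_G_L[of 0 "- (al + 1)" "Suc m" "- (al + 1)" 1]]) (simp add: G_def GK_def )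
  fix y :: real assume y: "0 < y"
  have K: "(-1 * y + - al) * laguerre m (- al) (1 * y) + 1 * y * ld m (- al) (1 * y) = (real m + 1) * laguerre (Suc m) (- (al + 1)) y"
    using LP4[of "- al" y m, unfolded ec1] by (simp add: algebra_simps)
  show "deriv (G (-1) (- al) m (- al) 1) y = (real m + 1) * ((exp (-1 * y) * y powr 0) * (y powr (- (al + 1)) * laguerre (Suc m) (- (al + 1)) y))"
    by (rule BLK_L[OF y K]) (use y in \<open>simp add: field_simps powr_minus exp_minus powr_diff \<close>)
qed
lemma cB4d: "sm (\<lambda>x. exp x * x powr (- (al + 1)) * laguerre m (- (al + 1)) (- x)) \<and> (\<forall>y>0. deriv (G 0 (- al) m (- al) (-1)) y = (real m - al) * ((exp (-1 * y) * y powr 0) * (exp y * y powr (- (al + 1)) * laguerre m (- (al + 1)) (- y))))"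
proof (intro conjI allI impI)
  show "sm (\<lambda>x. exp x * x powr (- (al + 1)) * laguerre m (- (al + 1)) (- x))"
    by (rule sm_eqI[OF _ sm_G_L[of 1 "- (al + 1)" m "- (al + 1)" "-1"]]) (simp add: G_def GK_def )
  fix y :: real assume y: "0 < y"
  have K: "(0 * y + - al) * laguerre m (- al) (-1 * y) + -1 * y * ld m (- al) (-1 * y) = (real m - al) * laguerre m (- (al + 1)) (- y)"
    using LP3[of "- al" m "- y", unfolded ec1] by (simp add: algebra_simps)
  show "deriv (G 0 (- al) m (- al) (-1)) y = (real m - al) * ((exp (-1 * y) * y powr 0) * (exp y * y powr (- (al + 1)) * laguerre m (- (al + 1)) (- y)))"
    by (rule BLK_L[OF y K]) (use y in \<open>simp add: field_simps powr_minus exp_minus powr_diff \<close>)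
qed
lemma cHd: "sm (htilde (al + 1) lam) \<and> (\<forall>y>0. deriv (GK (-1) (- al) (- lam - al) (1 - al) 1) y = (- al) * ((exp (-1 * y) * y powr 0) * htilde (al + 1) lam y))"
proof (intro conjI allI impI)
  show "sm (htilde (al + 1) lam)"
    by (rule sm_eqI[OF _ sm_G_K[of 0 "- (al + 1)" "- lam - al - 1" "- al" 1]]) (unfold htilde_def ec3 ec4, simp add: G_def GK_def )
  fix y :: real assume y: "0 < y"
  have K: "(-1 * y + - al) * kummerM (- lam - al) (1 - al) (1 * y) + 1 * y * ((- lam - al) / (1 - al) * kummerM (- lam - al + 1) (1 - al + 1) (1 * y)) = (- al) * kummerM (- lam - al - 1) (- al) y"
    using KC[where b = "1 - al" and a = "- lam - al" and y = y, OF B_ni0[OF al], unfolded ec2] by (simp add: algebra_simps)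
  show "deriv (GK (-1) (- al) (- lam - al) (1 - al) 1) y = (- al) * ((exp (-1 * y) * y powr 0) * htilde (al + 1) lam y)"
    by (rule BLK_K[OF y K]) (use y in \<open>unfold htilde_def ec3 ec4, simp add: field_simps powr_minus exp_minus powr_diff \<close>)
qed

lemma c0': "\<forall>y>0. G 0 0 0 al (-1) y = 1" by (simp add: G_def)

lemma partC:
  assumes M1: "maya M1" and M2: "maya M2" and z: "0 \<in> M2"
  shows "\<exists>s::real. (s = 1 \<or> s = -1) \<and> (\<forall>x>0.
        Omega M1 M2 al (htilde al lam) x =
          s * ((- al) * (\<Prod>m'\<leftarrow>maya_neg M2. real m' + 1) * (\<Prod>n'\<leftarrow>maya_neg M1. real n' - al))
            * Omega M1 (maya_shift M2 (-1)) (al + 1) (htilde (al + 1) lam) x)"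
proof -
  define P where "P = maya_pos M1"
  define Q where "Q = maya_pos (maya_shift M2 (-1))"
  define R where "R = maya_neg M2"
  define S where "S = maya_neg M1"
  have hQ: "maya_pos M2 = map Suc Q @ [0]" using shiftA(1)[OF M2 z] Q_def by simp
  have hR: "maya_neg (maya_shift M2 (-1)) = map Suc R" using shiftA(2)[OF M2 z] R_def by simp
  define fs where "fs = seed_functions M1 M2 al @ [htilde al lam]"
  define A where "A = map (\<lambda>n. G (-1) 0 n al 1) P @ map (\<lambda>m. G 0 0 (Suc m) al (-1)) Q"
  define B where "B = map (\<lambda>m. G (-1) (- al) m (- al) 1) R @ map (\<lambda>m. G 0 (- al) m (- al) (-1)) S
      @ [GK (-1) (- al) (- lam - al) (1 - al) 1]"
  define qs where "qs = A @ [G 0 0 0 al (-1)] @ B"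
  define cgs where "cgs = map (\<lambda>n. (-1::real, \<lambda>x. laguerre n (al + 1) x)) P
      @ map (\<lambda>m. (1::real, \<lambda>x. exp x * laguerre m (al + 1) (- x))) Q
      @ map (\<lambda>m. (real m + 1, \<lambda>x. x powr (- (al + 1)) * laguerre (Suc m) (- (al + 1)) x)) R
      @ map (\<lambda>m. (real m - al, \<lambda>x. exp x * x powr (- (al + 1)) * laguerre m (- (al + 1)) (- x))) S
      @ [(- al, htilde (al + 1) lam)]"
  have fs_eq: "fs = (map (\<lambda>n x. laguerre n al x) P @ map (\<lambda>m x. exp x * laguerre (Suc m) al (- x)) Q)
       @ [\<lambda>x. exp x * laguerre 0 al (- x)]
       @ (map (\<lambda>m x. x powr (- al) * laguerre m (- al) x) R
       @ map (\<lambda>m x. exp x * x powr (- al) * laguerre m (- al) (- x)) S @ [htilde al lam])"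
    unfolding fs_def seed_functions_def hQ P_def[symmetric] R_def[symmetric] S_def[symmetric] by (simp add: fun_eq_iff)
  have rel1: "list_all2 (\<lambda>f q. sm q \<and> (\<forall>y>0. f y = (\<lambda>y. exp (1 * y) * y powr 0) y * q y)) fs qs"
    unfolding fs_eq qs_def A_def B_def append_assoc
    apply (intro list_all2_appendI la2_map list.rel_intros)
    by (simp_all add: cB1 c0 c0' sm_G_L cB2 cB3 cB4 cH[simplified htilde_def] htilde_def)
  have k: "length A < length qs" unfolding qs_def by simp
  have qk: "qs ! length A = G 0 0 0 al (-1)" unfolding qs_def by (simp add: nth_append)
  have one: "\<forall>y>0. (qs ! length A) y = 1" unfolding qk by (rule c0')
  have rel2: "list_all2 (\<lambda>q cg. sm (snd cg) \<and> (\<forall>y>0. deriv q y = fst cg * ((\<lambda>y. exp (-1 * y) * y powr 0) y * snd cg y)))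
                 (take (length A) qs @ drop (Suc (length A)) qs) cgs"
    unfolding qs_def remove_mid unfolding A_def B_def cgs_def append_assoc
    apply (intro list_all2_appendI la2_map list.rel_intros)
    apply (simp_all only: fst_conv snd_conv)
    apply (rule cB1d cB2d cB3d cB4d cHd)+
    done
  have W: "wronskian fs x = (-1) ^ length A * (exp (1 * x) * x powr 0) ^ length fs * (exp (-1 * x) * x powr 0) ^ (length fs - 1)
            * prod_list (map fst cgs) * wronskian (map snd cgs) x" if x: "0 < x" for x
    using RED[OF sm_G sm_G x rel1 k one rel2] by simp
  have snd_eq: "map snd cgs = seed_functions M1 (maya_shift M2 (-1)) (al + 1) @ [htilde (al + 1) lam]"
    unfolding cgs_def seed_functions_def hR Q_def[symmetric] P_def[symmetric] S_def[symmetric] by (simp add: comp_def)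
  have fst_eq: "prod_list (map fst cgs) = (-1) ^ length P * ((- al) * (\<Prod>m'\<leftarrow>R. real m' + 1) * (\<Prod>n'\<leftarrow>S. real n' - al))"
    unfolding cgs_def by (simp add: prod_const comp_def)
  have lens: "length (maya_pos M2) = Suc (length Q)" "length (maya_neg (maya_shift M2 (-1))) = length R"
    using hQ hR by simp_all
  have LF: "length fs = length P + length Q + length R + length S + 2" unfolding fs_eq by simp
  show ?thesis
  proof (intro exI[of _ "(-1) ^ length A * (-1) ^ length P"] conjI allI impI)
    show "(-1::real) ^ length A * (-1) ^ length P = 1 \<or> (-1::real) ^ length A * (-1) ^ length P = -1"
      using pm1[of "length A + length P"] by (simp add: power_add)
    fix x :: real assume x: "0 < x"
    have pf: "exp (- real (length (maya_pos M2) + length S) * x) * x powr ((al + real (length P) + real (length (maya_pos M2))) * real (length R + length S + 1))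
       * ((exp (1 * x) * x powr 0) ^ length fs * (exp (-1 * x) * x powr 0) ^ (length fs - 1))
       = exp (- real (length Q + length S) * x) * x powr ((al + 1 + real (length P) + real (length Q)) * real (length (maya_neg (maya_shift M2 (-1))) + length S + 1))"
      by (rule pref[OF x]) (simp_all add: LF lens algebra_simps)
    have "Omega M1 M2 al (htilde al lam) x = exp (- real (length (maya_pos M2) + length S) * x) * x powr ((al + real (length P) + real (length (maya_pos M2))) * real (length R + length S + 1)) * wronskian fs x"
      unfolding Omega_def Let_def fs_def P_def S_def R_def ..
    also have "\<dots> = ((-1) ^ length A * prod_list (map fst cgs)) * (exp (- real (length (maya_pos M2) + length S) * x) * x powr ((al + real (length P) + real (length (maya_pos M2))) * real (length R + length S + 1))
       * ((exp (1 * x) * x powr 0) ^ length fs * (exp (-1 * x) * x powr 0) ^ (length fs - 1))) * wronskian (map snd cgs) x"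
      unfolding W[OF x] by (simp only: mult_ac)
    also have "\<dots> = ((-1) ^ length A * prod_list (map fst cgs)) * Omega M1 (maya_shift M2 (-1)) (al + 1) (htilde (al + 1) lam) x"
      unfolding pf unfolding Omega_def Let_def snd_eq P_def S_def Q_def by (simp only: mult_ac)
    finally show "Omega M1 M2 al (htilde al lam) x = (-1) ^ length A * (-1) ^ length P *
        ((- al) * (\<Prod>m'\<leftarrow>maya_neg M2. real m' + 1) * (\<Prod>n'\<leftarrow>maya_neg M1. real n' - al)) *
        Omega M1 (maya_shift M2 (-1)) (al + 1) (htilde (al + 1) lam) x"
      unfolding fst_eq R_def S_def by (simp only: mult_ac)
  qed
qed

end

context fixes al lam :: real assumes al: "al \<notin> \<int>"
begin

lemma ed1: "- al + 1 = - (al - 1)" by simp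
lemma ed3: "- lam - (al - 1) = - lam - al + 1" by simp
lemma ed4: "1 - (al - 1) = 1 - al + 1" by simp

section \<open>Part d\<close>
lemma dB1: "sm (G 0 al n al 1) \<and> (\<forall>y>0. laguerre n al y = (exp (0 * y) * y powr (- al)) * G 0 al n al 1 y)"
proof (intro conjI sm_G_L sm_G_K allI impI)
  fix y :: real assume y: "0 < y"
  show "laguerre n al y = (exp (0 * y) * y powr (- al)) * G 0 al n al 1 y"
    using y unfolding G_def GK_def by (simp add: field_simps powr_minus exp_minus )
qed
lemma d0: "sm (G 0 0 0 (- al) 1) \<and> (\<forall>y>0. y powr (- al) * laguerre 0 (- al) y = (exp (0 * y) * y powr (- al)) * G 0 0 0 (- al) 1 y)"
proof (intro conjI sm_G_L sm_G_K allI impI)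
  fix y :: real assume y: "0 < y"
  show "y powr (- al) * laguerre 0 (- al) y = (exp (0 * y) * y powr (- al)) * G 0 0 0 (- al) 1 y"
    using y unfolding G_def GK_def by (simp add: field_simps powr_minus exp_minus )
qed
lemma dB2: "sm (G 1 al m al (-1)) \<and> (\<forall>y>0. exp y * laguerre m al (- y) = (exp (0 * y) * y powr (- al)) * G 1 al m al (-1) y)"
proof (intro conjI sm_G_L sm_G_K allI impI)
  fix y :: real assume y: "0 < y"
  show "exp y * laguerre m al (- y) = (exp (0 * y) * y powr (- al)) * G 1 al m al (-1) y"
    using y unfolding G_def GK_def by (simp add: field_simps powr_minus exp_minus )
qed
lemma dB3: "sm (G 0 0 (Suc m) (- al) 1) \<and> (\<forall>y>0. y powr (- al) * laguerre (Suc m) (- al) y = (exp (0 * y) * y powr (- al)) * G 0 0 (Suc m) (- al) 1 y)"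
proof (intro conjI sm_G_L sm_G_K allI impI)
  fix y :: real assume y: "0 < y"
  show "y powr (- al) * laguerre (Suc m) (- al) y = (exp (0 * y) * y powr (- al)) * G 0 0 (Suc m) (- al) 1 y"
    using y unfolding G_def GK_def by (simp add: field_simps powr_minus exp_minus )
qed
lemma dB4: "sm (G 1 0 m (- al) (-1)) \<and> (\<forall>y>0. exp y * y powr (- al) * laguerre m (- al) (- y) = (exp (0 * y) * y powr (- al)) * G 1 0 m (- al) (-1) y)"
proof (intro conjI sm_G_L sm_G_K allI impI)
  fix y :: real assume y: "0 < y"
  show "exp y * y powr (- al) * laguerre m (- al) (- y) = (exp (0 * y) * y powr (- al)) * G 1 0 m (- al) (-1) y"
    using y unfolding G_def GK_def by (simp add: field_simps powr_minus exp_minus )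
qed
lemma dH: "sm (GK 0 0 (- lam - al) (1 - al) 1) \<and> (\<forall>y>0. y powr (- al) * kummerM (- lam - al) (1 - al) y = (exp (0 * y) * y powr (- al)) * GK 0 0 (- lam - al) (1 - al) 1 y)"
proof (intro conjI sm_G_L sm_G_K allI impI)
  fix y :: real assume y: "0 < y"
  show "y powr (- al) * kummerM (- lam - al) (1 - al) y = (exp (0 * y) * y powr (- al)) * GK 0 0 (- lam - al) (1 - al) 1 y"
    using y unfolding G_def GK_def by (simp add: field_simps powr_minus exp_minus )
qed
lemma dB1d: "sm (\<lambda>x. laguerre n (al - 1) x) \<and> (\<forall>y>0. deriv (G 0 al n al 1) y = (real n + al) * ((exp (0 * y) * y powr (al - 1)) * laguerre n (al - 1) y))"
proof (intro conjI allI impI)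
  show "sm (\<lambda>x. laguerre n (al - 1) x)"
    by (rule sm_eqI[OF _ sm_G_L[of 0 0 n "al - 1" 1]]) (simp add: G_def GK_def )
  fix y :: real assume y: "0 < y"
  have K: "(0 * y + al) * laguerre n al (1 * y) + 1 * y * ld n al (1 * y) = (real n + al) * laguerre n (al - 1) y"
    using LP3[of al n y] by (simp add: algebra_simps)
  show "deriv (G 0 al n al 1) y = (real n + al) * ((exp (0 * y) * y powr (al - 1)) * laguerre n (al - 1) y)"
    by (rule BLK_L[OF y K]) (use y in \<open>simp add: field_simps powr_minus exp_minus powr_diff \<close>)
qed
lemma dB2d: "sm (\<lambda>x. exp x * laguerre (Suc m) (al - 1) (- x)) \<and> (\<forall>y>0. deriv (G 1 al m al (-1)) y = (real m + 1) * ((exp (0 * y) * y powr (al - 1)) * (exp y * laguerre (Suc m) (al - 1) (- y))))"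
proof (intro conjI allI impI)
  show "sm (\<lambda>x. exp x * laguerre (Suc m) (al - 1) (- x))"
    by (rule sm_eqI[OF _ sm_G_L[of 1 0 "Suc m" "al - 1" "-1"]]) (simp add: G_def GK_def )
  fix y :: real assume y: "0 < y"
  have K: "(1 * y + al) * laguerre m al (-1 * y) + -1 * y * ld m al (-1 * y) = (real m + 1) * laguerre (Suc m) (al - 1) (- y)"
    using LP4[of al "- y" m] by (simp add: algebra_simps)
  show "deriv (G 1 al m al (-1)) y = (real m + 1) * ((exp (0 * y) * y powr (al - 1)) * (exp y * laguerre (Suc m) (al - 1) (- y)))"
    by (rule BLK_L[OF y K]) (use y in \<open>simp add: field_simps powr_minus exp_minus powr_diff \<close>)
qed
lemma dB3d: "sm (\<lambda>x. x powr (- (al - 1)) * laguerre m (- (al - 1)) x) \<and> (\<forall>y>0. deriv (G 0 0 (Suc m) (- al) 1) y = (-1) * ((exp (0 * y) * y powr (al - 1)) * (y powr (- (al - 1)) * laguerre m (- (al - 1)) y)))"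
proof (intro conjI allI impI)
  show "sm (\<lambda>x. x powr (- (al - 1)) * laguerre m (- (al - 1)) x)"
    by (rule sm_eqI[OF _ sm_G_L[of 0 "- (al - 1)" m "- (al - 1)" 1]]) (simp add: G_def GK_def )
  fix y :: real assume y: "0 < y"
  have K: "(0 * y + 0) * laguerre (Suc m) (- al) (1 * y) + 1 * y * ld (Suc m) (- al) (1 * y) = (-1) * (y * laguerre m (- (al - 1)) y)"
    unfolding ld_def ed1 by simp
  show "deriv (G 0 0 (Suc m) (- al) 1) y = (-1) * ((exp (0 * y) * y powr (al - 1)) * (y powr (- (al - 1)) * laguerre m (- (al - 1)) y))"
    by (rule BLK_L[OF y K]) (use y in \<open>simp add: field_simps powr_minus exp_minus powr_diff \<close>)
qed
lemma dB4d: "sm (\<lambda>x. exp x * x powr (- (al - 1)) * laguerre m (- (al - 1)) (- x)) \<and> (\<forall>y>0. deriv (G 1 0 m (- al) (-1)) y = 1 * ((exp (0 * y) * y powr (al - 1)) * (exp y * y powr (- (al - 1)) * laguerre m (- (al - 1)) (- y))))"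
proof (intro conjI allI impI)
  show "sm (\<lambda>x. exp x * x powr (- (al - 1)) * laguerre m (- (al - 1)) (- x))"
    by (rule sm_eqI[OF _ sm_G_L[of 1 "- (al - 1)" m "- (al - 1)" "-1"]]) (simp add: G_def GK_def )
  fix y :: real assume y: "0 < y"
  have K: "(1 * y + 0) * laguerre m (- al) (-1 * y) + -1 * y * ld m (- al) (-1 * y) = 1 * (y * laguerre m (- (al - 1)) (- y))"
    using LP2[of m "- al" "- y", unfolded ed1] by (simp add: algebra_simps)
  show "deriv (G 1 0 m (- al) (-1)) y = 1 * ((exp (0 * y) * y powr (al - 1)) * (exp y * y powr (- (al - 1)) * laguerre m (- (al - 1)) (- y)))"
    by (rule BLK_L[OF y K]) (use y in \<open>simp add: field_simps powr_minus exp_minus powr_diff \<close>)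
qed
lemma dHd: "sm (htilde (al - 1) lam) \<and> (\<forall>y>0. deriv (GK 0 0 (- lam - al) (1 - al) 1) y = ((- lam - al) / (1 - al)) * ((exp (0 * y) * y powr (al - 1)) * htilde (al - 1) lam y))"
proof (intro conjI allI impI)
  show "sm (htilde (al - 1) lam)"
    by (rule sm_eqI[OF _ sm_G_K[of 0 "- (al - 1)" "- lam - al + 1" "1 - al + 1" 1]]) (unfold htilde_def ed3 ed4, simp add: G_def GK_def )
  fix y :: real assume y: "0 < y"
  have K: "(0 * y + 0) * kummerM (- lam - al) (1 - al) (1 * y) + 1 * y * ((- lam - al) / (1 - al) * kummerM (- lam - al + 1) (1 - al + 1) (1 * y)) = ((- lam - al) / (1 - al)) * (y * kummerM (- lam - al + 1) (1 - al + 1) y)"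
    by simp
  show "deriv (GK 0 0 (- lam - al) (1 - al) 1) y = ((- lam - al) / (1 - al)) * ((exp (0 * y) * y powr (al - 1)) * htilde (al - 1) lam y)"
    by (rule BLK_K[OF y K]) (use y in \<open>unfold htilde_def ed3 ed4, simp add: field_simps powr_minus exp_minus powr_diff \<close>)
qed

lemma d0': "\<forall>y>0. G 0 0 0 (- al) 1 y = 1" by (simp add: G_def)

lemma partD:
  assumes M1: "maya M1" and M2: "maya M2" and z: "-1 \<notin> M2"
  shows "\<exists>s::real. (s = 1 \<or> s = -1) \<and> (\<forall>x>0.
        Omega M1 M2 al (htilde al lam) x =
          s * ((- lam - al) / (1 - al) * (\<Prod>n\<leftarrow>maya_pos M1. real n + al) * (\<Prod>m\<leftarrow>maya_pos M2. real m + 1))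
            * Omega M1 (maya_shift M2 1) (al - 1) (htilde (al - 1) lam) x)"
proof -
  define P where "P = maya_pos M1"
  define Q where "Q = maya_pos M2"
  define R where "R = maya_neg (maya_shift M2 1)"
  define S where "S = maya_neg M1"
  have hR: "maya_neg M2 = map Suc R @ [0]" using shiftB(1)[OF M2 z] R_def by simp
  have hQ: "maya_pos (maya_shift M2 1) = map Suc Q" using shiftB(2)[OF M2 z] Q_def by simp
  define fs where "fs = seed_functions M1 M2 al @ [htilde al lam]"
  define A where "A = map (\<lambda>n. G 0 al n al 1) P @ map (\<lambda>m. G 1 al m al (-1)) Q @ map (\<lambda>m. G 0 0 (Suc m) (- al) 1) R"
  define B where "B = map (\<lambda>m. G 1 0 m (- al) (-1)) S @ [GK 0 0 (- lam - al) (1 - al) 1]"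
  define qs where "qs = A @ [G 0 0 0 (- al) 1] @ B"
  define cgs where "cgs = map (\<lambda>n. (real n + al, \<lambda>x. laguerre n (al - 1) x)) P
      @ map (\<lambda>m. (real m + 1, \<lambda>x. exp x * laguerre (Suc m) (al - 1) (- x))) Q
      @ map (\<lambda>m. (-1::real, \<lambda>x. x powr (- (al - 1)) * laguerre m (- (al - 1)) x)) R
      @ map (\<lambda>m. (1::real, \<lambda>x. exp x * x powr (- (al - 1)) * laguerre m (- (al - 1)) (- x))) S
      @ [((- lam - al) / (1 - al), htilde (al - 1) lam)]"
  have fs_eq: "fs = (map (\<lambda>n x. laguerre n al x) P @ map (\<lambda>m x. exp x * laguerre m al (- x)) Q
       @ map (\<lambda>m x. x powr (- al) * laguerre (Suc m) (- al) x) R)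
       @ [\<lambda>x. x powr (- al) * laguerre 0 (- al) x]
       @ (map (\<lambda>m x. exp x * x powr (- al) * laguerre m (- al) (- x)) S @ [htilde al lam])"
    unfolding fs_def seed_functions_def hR P_def[symmetric] Q_def[symmetric] S_def[symmetric] by (simp add: fun_eq_iff)
  have rel1: "list_all2 (\<lambda>f q. sm q \<and> (\<forall>y>0. f y = (\<lambda>y. exp (0 * y) * y powr (- al)) y * q y)) fs qs"
    unfolding fs_eq qs_def A_def B_def append_assoc
    apply (intro list_all2_appendI la2_map list.rel_intros)
    by (simp_all add: dB1 d0 d0' sm_G_L dB2 dB3 dB4 dH[simplified htilde_def] htilde_def)
  have k: "length A < length qs" unfolding qs_def by simp
  have qk: "qs ! length A = G 0 0 0 (- al) 1" unfolding qs_def by (simp add: nth_append)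
  have one: "\<forall>y>0. (qs ! length A) y = 1" unfolding qk by (rule d0')
  have rel2: "list_all2 (\<lambda>q cg. sm (snd cg) \<and> (\<forall>y>0. deriv q y = fst cg * ((\<lambda>y. exp (0 * y) * y powr (al - 1)) y * snd cg y)))
                 (take (length A) qs @ drop (Suc (length A)) qs) cgs"
    unfolding qs_def remove_mid unfolding A_def B_def cgs_def append_assoc
    apply (intro list_all2_appendI la2_map list.rel_intros)
    apply (simp_all only: fst_conv snd_conv)
    apply (rule dB1d dB2d dB3d dB4d dHd)+
    done
  have W: "wronskian fs x = (-1) ^ length A * (exp (0 * x) * x powr (- al)) ^ length fs * (exp (0 * x) * x powr (al - 1)) ^ (length fs - 1)
            * prod_list (map fst cgs) * wronskian (map snd cgs) x" if x: "0 < x" for x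
    using RED[OF sm_G sm_G x rel1 k one rel2] by simp
  have snd_eq: "map snd cgs = seed_functions M1 (maya_shift M2 1) (al - 1) @ [htilde (al - 1) lam]"
    unfolding cgs_def seed_functions_def hQ R_def[symmetric] P_def[symmetric] S_def[symmetric] by (simp add: comp_def)
  have fst_eq: "prod_list (map fst cgs) = (-1) ^ length R * ((- lam - al) / (1 - al) * (\<Prod>n\<leftarrow>P. real n + al) * (\<Prod>m\<leftarrow>Q. real m + 1))"
    unfolding cgs_def by (simp add: prod_const comp_def)
  have lens: "length (maya_neg M2) = Suc (length R)" "length (maya_pos (maya_shift M2 1)) = length Q"
    using hR hQ by simp_all
  have LF: "length fs = length P + length Q + length R + length S + 2" unfolding fs_eq by simp
  show ?thesis
  proof (intro exI[of _ "(-1) ^ length A * (-1) ^ length R"] conjI allI impI)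
    show "(-1::real) ^ length A * (-1) ^ length R = 1 \<or> (-1::real) ^ length A * (-1) ^ length R = -1"
      using pm1[of "length A + length R"] by (simp add: power_add)
    fix x :: real assume x: "0 < x"
    have pf: "exp (- real (length Q + length S) * x) * x powr ((al + real (length P) + real (length Q)) * real (length (maya_neg M2) + length S + 1))
       * ((exp (0 * x) * x powr (- al)) ^ length fs * (exp (0 * x) * x powr (al - 1)) ^ (length fs - 1))
       = exp (- real (length (maya_pos (maya_shift M2 1)) + length S) * x) * x powr ((al - 1 + real (length P) + real (length (maya_pos (maya_shift M2 1)))) * real (length R + length S + 1))"
      by (rule pref[OF x]) (simp_all add: LF lens algebra_simps)
    have "Omega M1 M2 al (htilde al lam) x = exp (- real (length Q + length S) * x) * x powr ((al + real (length P) + real (length Q)) * real (length (maya_neg M2) + length S + 1)) * wronskian fs x"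
      unfolding Omega_def Let_def fs_def P_def S_def Q_def ..
    also have "\<dots> = ((-1) ^ length A * prod_list (map fst cgs)) * (exp (- real (length Q + length S) * x) * x powr ((al + real (length P) + real (length Q)) * real (length (maya_neg M2) + length S + 1))
       * ((exp (0 * x) * x powr (- al)) ^ length fs * (exp (0 * x) * x powr (al - 1)) ^ (length fs - 1))) * wronskian (map snd cgs) x"
      unfolding W[OF x] by (simp only: mult_ac)
    also have "\<dots> = ((-1) ^ length A * prod_list (map fst cgs)) * Omega M1 (maya_shift M2 1) (al - 1) (htilde (al - 1) lam) x"
      unfolding pf unfolding Omega_def Let_def snd_eq P_def S_def R_def by (simp only: mult_ac)
    finally show "Omega M1 M2 al (htilde al lam) x = (-1) ^ length A * (-1) ^ length R *
        ((- lam - al) / (1 - al) * (\<Prod>n\<leftarrow>maya_pos M1. real n + al) * (\<Prod>m\<leftarrow>maya_pos M2. real m + 1)) *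
        Omega M1 (maya_shift M2 1) (al - 1) (htilde (al - 1) lam) x"
      unfolding fst_eq P_def Q_def by (simp only: mult_ac)
  qed
qed

end


theorem corollary5p6:
  fixes M1 M2 :: "int set" and \<alpha> lam :: real
  assumes "maya M1" and "maya M2" and "\<alpha> \<notin> \<int>"
  shows
   "(maya_pos M1 \<noteq> [] \<and> last (maya_pos M1) = 0 \<longrightarrow>
      (\<exists>s::real. (s = 1 \<or> s = -1) \<and> (\<forall>x>0.
        Omega M1 M2 \<alpha> (htilde \<alpha> lam) x =
          s * ((- \<alpha>) * (\<Prod>m'\<leftarrow>maya_neg M2. real m' - \<alpha>) * (\<Prod>n'\<leftarrow>maya_neg M1. real n' + 1))
            * Omega (maya_shift M1 (-1)) M2 (\<alpha> + 1) (htilde (\<alpha> + 1) (lam - 1)) x)))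
  \<and> (maya_neg M1 \<noteq> [] \<and> last (maya_neg M1) = 0 \<longrightarrow>
      (\<exists>s::real. (s = 1 \<or> s = -1) \<and> (\<forall>x>0.
        Omega M1 M2 \<alpha> (htilde \<alpha> lam) x =
          s * ((lam + 1) / (1 - \<alpha>) * (\<Prod>n\<leftarrow>maya_pos M1. real n + 1) * (\<Prod>m\<leftarrow>maya_pos M2. real m + \<alpha>))
            * Omega (maya_shift M1 1) M2 (\<alpha> - 1) (htilde (\<alpha> - 1) (lam + 1)) x)))
  \<and> (maya_pos M2 \<noteq> [] \<and> last (maya_pos M2) = 0 \<longrightarrow>
      (\<exists>s::real. (s = 1 \<or> s = -1) \<and> (\<forall>x>0.
        Omega M1 M2 \<alpha> (htilde \<alpha> lam) x =
          s * ((- \<alpha>) * (\<Prod>m'\<leftarrow>maya_neg M2. real m' + 1) * (\<Prod>n'\<leftarrow>maya_neg M1. real n' - \<alpha>))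
            * Omega M1 (maya_shift M2 (-1)) (\<alpha> + 1) (htilde (\<alpha> + 1) lam) x)))
  \<and> (maya_neg M2 \<noteq> [] \<and> last (maya_neg M2) = 0 \<longrightarrow>
      (\<exists>s::real. (s = 1 \<or> s = -1) \<and> (\<forall>x>0.
        Omega M1 M2 \<alpha> (htilde \<alpha> lam) x =
          s * ((- lam - \<alpha>) / (1 - \<alpha>) * (\<Prod>n\<leftarrow>maya_pos M1. real n + \<alpha>) * (\<Prod>m\<leftarrow>maya_pos M2. real m + 1))
            * Omega M1 (maya_shift M2 1) (\<alpha> - 1) (htilde (\<alpha> - 1) lam) x)))"
  proof (intro conjI impI)
  assume h: "maya_pos M1 \<noteq> [] \<and> last (maya_pos M1) = 0"
  show "\<exists>s::real. (s = 1 \<or> s = -1) \<and> (\<forall>x>0.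
        Omega M1 M2 \<alpha> (htilde \<alpha> lam) x =
          s * ((- \<alpha>) * (\<Prod>m'\<leftarrow>maya_neg M2. real m' - \<alpha>) * (\<Prod>n'\<leftarrow>maya_neg M1. real n' + 1))
            * Omega (maya_shift M1 (-1)) M2 (\<alpha> + 1) (htilde (\<alpha> + 1) (lam - 1)) x)"
    by (rule partA[OF assms(3) assms(1) assms(2) last_pos[OF assms(1) h]])
next
  assume h: "maya_neg M1 \<noteq> [] \<and> last (maya_neg M1) = 0"
  show "\<exists>s::real. (s = 1 \<or> s = -1) \<and> (\<forall>x>0.
        Omega M1 M2 \<alpha> (htilde \<alpha> lam) x =
          s * ((lam + 1) / (1 - \<alpha>) * (\<Prod>n\<leftarrow>maya_pos M1. real n + 1) * (\<Prod>m\<leftarrow>maya_pos M2. real m + \<alpha>))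
            * Omega (maya_shift M1 1) M2 (\<alpha> - 1) (htilde (\<alpha> - 1) (lam + 1)) x)"
    by (rule partB[OF assms(3) assms(1) assms(2) last_neg[OF assms(1) h]])
next
  assume h: "maya_pos M2 \<noteq> [] \<and> last (maya_pos M2) = 0"
  show "\<exists>s::real. (s = 1 \<or> s = -1) \<and> (\<forall>x>0.
        Omega M1 M2 \<alpha> (htilde \<alpha> lam) x =
          s * ((- \<alpha>) * (\<Prod>m'\<leftarrow>maya_neg M2. real m' + 1) * (\<Prod>n'\<leftarrow>maya_neg M1. real n' - \<alpha>))
            * Omega M1 (maya_shift M2 (-1)) (\<alpha> + 1) (htilde (\<alpha> + 1) lam) x)"
    by (rule partC[OF assms(3) assms(1) assms(2) last_pos[OF assms(2) h]])
next
  assume h: "maya_neg M2 \<noteq> [] \<and> last (maya_neg M2) = 0"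
  show "\<exists>s::real. (s = 1 \<or> s = -1) \<and> (\<forall>x>0.
        Omega M1 M2 \<alpha> (htilde \<alpha> lam) x =
          s * ((- lam - \<alpha>) / (1 - \<alpha>) * (\<Prod>n\<leftarrow>maya_pos M1. real n + \<alpha>) * (\<Prod>m\<leftarrow>maya_pos M2. real m + 1))
            * Omega M1 (maya_shift M2 1) (\<alpha> - 1) (htilde (\<alpha> - 1) lam) x)"
    by (rule partD[OF assms(3) assms(1) assms(2) last_neg[OF assms(2) h]])
qed

end
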